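(* Let $n\ge 3$ and let $(\mathcal X,w)$ be a fully symmetric finite weighted set in $\mathbb R^n\setminus\{0\}$ with norm spectrum $R$, whose weight function takes a constant value $w_r$ on each layer $\mathcal X_r=\mathcal X\cap S^{n-1}_r$. Define $f_{4,2}=x_1^4-6x_1^2x_2^2+x_2^4$, $f_{6,3}=2(x_1^6+x_2^6+x_3^6)-15(x_1^4x_2^2+x_1^2x_2^4+x_1^4x_3^2+x_1^2x_3^4+x_2^4x_3^2+x_2^2x_3^4)+180x_1^2x_2^2x_3^2$, $f_{8,2}=x_1^8-28x_1^6x_2^2+70x_1^4x_2^4-28x_1^2x_2^6+x_2^8$, $f_{8,4}=3\sum_{i=1}^4x_i^8-28\sum_{i\ne j}x_i^6x_j^2+210\sum x_i^4x_j^2x_k^2-3780x_1^2x_2^2x_3^2x_4^2$, where the second sum is over ordered pairs of distinct $i,j\in\{1,2,3,4\}$ and the third over $i\in\{1,2,3,4\}$ and unordered pairs $\{j,k\}\subseteq\{1,2,3,4\}\setminus\{i\}$. Then: 1. $(\mathcal X,w)$ is at least a Euclidean $3$-design. 2. $(\mathcal X,w)$ is a Euclidean $5$-design iff $\sum_{r\in R}\sum_{x\in\mathcal X_r}w_rf_{4,2}(x)=0$. 3. $(\mathcal X,w)$ is a Euclidean $7$-design iff $\sum_{r\in R}\sum_{x\in\mathcal X_r}w_r r^{2s_1}f_{4,2}(x)=0$ for $s_1=0,1$ and $\sum_{r\in R}\sum_{x\in\mathcal X_r}w_rf_{6,3}(x)=0$. 4. $(\mathcal X,w)$ is a Euclidean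 $9$-design iff $\sum_{r\in R}\sum_{x\in\mathcal X_r}w_r r^{2s_1}f_{4,2}(x)=0$ for $s_1=0,1,2$, $\sum_{r\in R}\sum_{x\in\mathcal X_r}w_r r^{2s_2}f_{6,3}(x)=0$ for $s_2=0,1$, $\sum_{r\in R}\sum_{x\in\mathcal X_r}w_rf_{8,2}(x)=0$, and $\sum_{r\in R}\sum_{x\in\mathcal X_r}w_rf_{8,4}(x)=0$.
   Context: The hyperoctahedral group $H$ is the subgroup of $O(n)$ generated by all coordinate transpositions and all reflections in coordinate hyperplanes. A weighted set $(\mathcal X,w)$ (finite $\mathcal X\subset\mathbb R^n$, positive weights) is fully symmetric if $\mathcal X^g=\mathcal X$ for all $g\in H$ and $w(x)=w(y)$ whenever $x=y^g$ for some $g\in H$. Norm spectrum: $R=\{\|x\|:x\in\mathcal X\}$; $W_r=\sum_{x\in\mathcal X_r}w(x)$. $(\mathcal X,w)$ is a Euclidean $t$-design if $\sum_{r\in R}W_r\overline f_{S^{n-1}_r}=\sum_{x\in\mathcal X}w(x)f(x)$ for every real polynomial $f$ of total degree at most $t$, where $\overline f_{S^{n-1}_r}$ is the average of $f$ over the sphere of radius $r$ centered at the origin. The polynomials above are evaluated at $x\in\mathbb R^n$ through its first two, three or four coordinates. *)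

theory Defs
  imports "HOL-Analysis.Analysis"
begin

text \<open>Points of R^n are vectors of type real^'n, where the index type 'n is finite and
linearly ordered; the ordering fixes which coordinates are x_1, x_2, ...
crd k x is the (k+1)-th coordinate (0-based index k).\<close>

definition crd :: "nat \<Rightarrow> real^'n::{finite,linorder} \<Rightarrow> real" where
  "crd k x = x $ (sorted_list_of_set (UNIV :: 'n set) ! k)"

text \<open>The group generated by all coordinate transpositions and all reflections in
coordinate hyperplanes (the generators are involutions, so the monoid they generate
under composition is the group they generate).\<close>

definition coord_transp :: "'n::finite \<Rightarrow> 'n \<Rightarrow> real^'n \<Rightarrow> real^'n" where
  "coord_transp a b x = (\<chi> i. x $ (if i = a then b else if i = b then a else i))"

definition coord_refl :: "'n::finite \<Rightarrow> real^'n \<Rightarrow> real^'n" where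
  "coord_refl a x = (\<chi> i. if i = a then - (x $ i) else x $ i)"

inductive_set hyperoct :: "(real^'n::finite \<Rightarrow> real^'n) set" where
  hyp_id: "id \<in> hyperoct"
| hyp_transp: "g \<in> hyperoct \<Longrightarrow> coord_transp a b \<circ> g \<in> hyperoct"
| hyp_refl: "g \<in> hyperoct \<Longrightarrow> coord_refl a \<circ> g \<in> hyperoct"

definition fully_symmetric :: "(real^'n::finite) set \<Rightarrow> (real^'n \<Rightarrow> real) \<Rightarrow> bool" where
  "fully_symmetric X w \<longleftrightarrow>
     (\<forall>g\<in>hyperoct. g ` X = X) \<and>
     (\<forall>g\<in>hyperoct. \<forall>x\<in>X. \<forall>y\<in>X. x = g y \<longrightarrow> w x = w y)"

definition poly_deg_le :: "nat \<Rightarrow> (real^'n::finite \<Rightarrow> real) \<Rightarrow> bool" where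
  "poly_deg_le t f \<longleftrightarrow>
     (\<exists>(A :: ('n \<Rightarrow> nat) set) (c :: ('n \<Rightarrow> nat) \<Rightarrow> real).
        finite A \<and> (\<forall>\<alpha>\<in>A. (\<Sum>i\<in>UNIV. \<alpha> i) \<le> t) \<and>
        f = (\<lambda>x. \<Sum>\<alpha>\<in>A. c \<alpha> * (\<Prod>i\<in>UNIV. (x $ i) ^ \<alpha> i)))"

text \<open>The normalized surface measure
on the unit sphere is the image of the normalized Lebesgue measure on the unit ball
under x \<mapsto> x/|x| (cone measure), which we use as definition.\<close>

definition sphere_avg :: "real \<Rightarrow> (real^'n::finite \<Rightarrow> real) \<Rightarrow> real" where
  "sphere_avg r f =
     integral (ball 0 1) (\<lambda>x. f ((r / norm x) *\<^sub>R x)) / measure lebesgue (ball (0::real^'n) 1)"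

definition norm_spectrum :: "(real^'n::finite) set \<Rightarrow> real set" where
  "norm_spectrum X = norm ` X"

definition layer :: "(real^'n::finite) set \<Rightarrow> real \<Rightarrow> (real^'n) set" where
  "layer X r = {x \<in> X. norm x = r}"

definition layer_weight :: "(real^'n::finite) set \<Rightarrow> (real^'n \<Rightarrow> real) \<Rightarrow> real \<Rightarrow> real" where
  "layer_weight X w r = (\<Sum>x\<in>layer X r. w x)"

definition euclidean_design ::
    "(real^'n::finite) set \<Rightarrow> (real^'n \<Rightarrow> real) \<Rightarrow> nat \<Rightarrow> bool" where
  "euclidean_design X w t \<longleftrightarrow>
     (\<forall>f. poly_deg_le t f \<longrightarrow>
        (\<Sum>r\<in>norm_spectrum X. layer_weight X w r * sphere_avg r f) = (\<Sum>x\<in>X. w x * f x))"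

definition f42 :: "real^'n::{finite,linorder} \<Rightarrow> real" where
  "f42 x = (let x1 = crd 0 x; x2 = crd 1 x in x1^4 - 6 * x1^2 * x2^2 + x2^4)"

definition f63 :: "real^'n::{finite,linorder} \<Rightarrow> real" where
  "f63 x = (let x1 = crd 0 x; x2 = crd 1 x; x3 = crd 2 x in
     2 * (x1^6 + x2^6 + x3^6)
     - 15 * (x1^4 * x2^2 + x1^2 * x2^4 + x1^4 * x3^2 + x1^2 * x3^4 + x2^4 * x3^2 + x2^2 * x3^4)
     + 180 * x1^2 * x2^2 * x3^2)"

definition f82 :: "real^'n::{finite,linorder} \<Rightarrow> real" where
  "f82 x = (let x1 = crd 0 x; x2 = crd 1 x in
     x1^8 - 28 * x1^6 * x2^2 + 70 * x1^4 * x2^4 - 28 * x1^2 * x2^6 + x2^8)"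

text \<open>Indices 0..3 stand for x_1..x_4. The second sum runs over ordered pairs (i,j),
i \<noteq> j; the third over i and unordered pairs {j,k} (j<k) not containing i.\<close>

definition f84 :: "real^'n::{finite,linorder} \<Rightarrow> real" where
  "f84 x =
     3 * (\<Sum>i<4. crd i x ^ 8)
     - 28 * (\<Sum>i<4. \<Sum>j<4. if i \<noteq> j then crd i x ^ 6 * crd j x ^ 2 else 0)
     + 210 * (\<Sum>i<4. \<Sum>j<4. \<Sum>k<4.
                 if j < k \<and> j \<noteq> i \<and> k \<noteq> i then crd i x ^ 4 * crd j x ^ 2 * crd k x ^ 2 else 0)
     - 3780 * crd 0 x ^ 2 * crd 1 x ^ 2 * crd 2 x ^ 2 * crd 3 x ^ 2"

definition moment :: "(real^'n::finite) set \<Rightarrow> (real^'n \<Rightarrow> real) \<Rightarrow> nat \<Rightarrow> (real^'n \<Rightarrow> real) \<Rightarrow> real" where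
  "moment X w s f = (\<Sum>r\<in>norm_spectrum X. \<Sum>x\<in>layer X r. w x * r ^ (2 * s) * f x)"

end

theory Submission
  imports Defs
begin

definition good :: "(real^'n::finite \<Rightarrow> real^'n) \<Rightarrow> bool" where
  "good T \<longleftrightarrow> linear T \<and> (\<forall>x. norm (T x) = norm x) \<and> distr lborel borel T = lborel"

definition sph :: "real \<Rightarrow> (real^'n::finite \<Rightarrow> real) \<Rightarrow> real^'n \<Rightarrow> real" where
  "sph r f x = (if x \<in> ball 0 1 then f ((r / norm x) *\<^sub>R x) else 0)"

lemma sph_meas:
  fixes f :: "real^'n::finite \<Rightarrow> real"
  assumes "continuous_on UNIV f" shows "sph r f \<in> borel_measurable borel"
proof -
  have f: "f \<in> borel_measurable borel" using borel_measurable_continuous_onI[OF assms] .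
  have "(\<lambda>x::real^'n. (r / norm x) *\<^sub>R x) \<in> borel_measurable borel" by measurable
  then have "(\<lambda>x. f ((r / norm x) *\<^sub>R x)) \<in> borel_measurable borel"
    using measurable_compose f by blast
  then show ?thesis unfolding sph_def
    by (intro measurable_If_set) auto
qed

lemma sph_bound:
  fixes f :: "real^'n::finite \<Rightarrow> real"
  assumes "continuous_on UNIV f" shows "\<exists>B. \<forall>x. norm (sph r f x) \<le> B"
proof -
  have "compact (f ` cball 0 \<bar>r\<bar>)"
    by (rule compact_continuous_image) (auto intro: continuous_on_subset[OF assms])
  then obtain B where B: "\<And>y. y \<in> cball 0 \<bar>r\<bar> \<Longrightarrow> norm (f y) \<le> B"
    using compact_imp_bounded bounded_iff by (metis imageI)
  have B0: "0 \<le> B" using B[of 0] by (meson norm_ge_zero order_trans centre_in_cball abs_ge_zero)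
  have "norm (sph r f x) \<le> B" for x
  proof (cases "x \<in> ball 0 1")
    case True
    have "norm ((r / norm x) *\<^sub>R x) \<le> \<bar>r\<bar>"
      by (cases "x = 0") (auto simp: abs_div)
    then show ?thesis using True B by (auto simp: sph_def)
  qed (use B0 in \<open>auto simp: sph_def\<close>)
  then show ?thesis by blast
qed

lemma sph_integrable:
  fixes f :: "real^'n::finite \<Rightarrow> real"
  assumes "continuous_on UNIV f" shows "integrable lborel (sph r f)"
proof -
  obtain B where B: "\<And>x. norm (sph r f x) \<le> B" using sph_bound[OF assms] by blast
  show ?thesis
  proof (rule integrableI_bounded_set[where A="ball 0 1" and B=B])
    show "sph r f \<in> borel_measurable lborel" using sph_meas[OF assms] by simp
    show "emeasure lborel (ball (0::real^'n) 1) < \<infinity>" by (rule emeasure_bounded_finite) auto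
    show "AE x in lborel. x \<in> ball 0 1 \<longrightarrow> norm (sph r f x) \<le> B"
      using B by simp
  qed (auto simp: sph_def)
qed

lemma avg_eq:
  fixes f :: "real^'n::finite \<Rightarrow> real"
  assumes "continuous_on UNIV f"
  shows "sphere_avg r f = integral\<^sup>L lborel (sph r f) / measure lebesgue (ball (0::real^'n) 1)"
proof -
  have "integral (ball 0 1) (\<lambda>x. f ((r / norm x) *\<^sub>R x)) = integral UNIV (sph r f)"
    unfolding sph_def by (rule integral_restrict_UNIV[symmetric])
  also have "\<dots> = integral\<^sup>L lborel (sph r f)"
    using has_integral_integral_lborel[OF sph_integrable[OF assms]] by (rule integral_unique)
  finally show ?thesis unfolding sphere_avg_def by simp
qed

lemma avg_add:
  fixes f g :: "real^'n::finite \<Rightarrow> real"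
  assumes "continuous_on UNIV f" "continuous_on UNIV g"
  shows "sphere_avg r (\<lambda>x. f x + g x) = sphere_avg r f + sphere_avg r g"
proof -
  have c: "continuous_on UNIV (\<lambda>x. f x + g x)" using assms by (intro continuous_intros)
  have "sph r (\<lambda>x. f x + g x) = (\<lambda>x. sph r f x + sph r g x)" by (auto simp: sph_def)
  then show ?thesis
    using assms c sph_integrable[OF assms(1)] sph_integrable[OF assms(2)]
    by (simp add: avg_eq add_divide_distrib)
qed

lemma avg_cmult:
  fixes f :: "real^'n::finite \<Rightarrow> real"
  assumes "continuous_on UNIV f"
  shows "sphere_avg r (\<lambda>x. c * f x) = c * sphere_avg r f"
proof -
  have c: "continuous_on UNIV (\<lambda>x. c * f x)" using assms by (intro continuous_intros)
  have "sph r (\<lambda>x. c * f x) = (\<lambda>x. c * sph r f x)" by (auto simp: sph_def)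
  then show ?thesis using assms c by (simp add: avg_eq)
qed

lemma avg_sum:
  fixes f :: "'a \<Rightarrow> real^'n::finite \<Rightarrow> real"
  assumes "\<And>i. i \<in> I \<Longrightarrow> continuous_on UNIV (f i)"
  shows "sphere_avg r (\<lambda>x. \<Sum>i\<in>I. f i x) = (\<Sum>i\<in>I. sphere_avg r (f i))"
proof -
  have c: "continuous_on UNIV (\<lambda>x. \<Sum>i\<in>I. f i x)" using assms by (intro continuous_intros) auto
  have "sph r (\<lambda>x. \<Sum>i\<in>I. f i x) = (\<lambda>x. \<Sum>i\<in>I. sph r (f i) x)" by (auto simp: sph_def)
  moreover have "integral\<^sup>L lborel (\<lambda>x. \<Sum>i\<in>I. sph r (f i) x) = (\<Sum>i\<in>I. integral\<^sup>L lborel (sph r (f i)))"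
    by (rule Bochner_Integration.integral_sum) (use assms sph_integrable in auto)
  ultimately show ?thesis using assms c
    by (simp add: avg_eq sum_divide_distrib)
qed

lemma avg_const:
  shows "sphere_avg r (\<lambda>x::real^'n::finite. c) = c"
proof -
  have "integral (ball (0::real^'n) 1) (\<lambda>x. c) = c * measure lebesgue (ball (0::real^'n) 1)"
    using lmeasure_integral[OF lmeasurable_ball, of "0::real^'n" 1]
      integral_cmul[of "ball (0::real^'n) 1" c "\<lambda>x. 1::real"] by simp
  moreover have "measure lebesgue (ball (0::real^'n) 1) > 0"
    using content_ball_pos[of 1 "0::real^'n"] by simp
  ultimately show ?thesis unfolding sphere_avg_def by simp
qed

lemma avg_inv:
  fixes f :: "real^'n::finite \<Rightarrow> real"
  assumes "good T" "continuous_on UNIV f"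
  shows "sphere_avg r (\<lambda>x. f (T x)) = sphere_avg r f"
proof -
  have lin: "linear T" and np: "\<And>x. norm (T x) = norm x" and d: "distr lborel borel T = lborel"
    using assms(1) unfolding good_def by auto
  have cT: "continuous_on UNIV T" using lin by (simp add: linear_continuous_on linear_linear)
  have cfT: "continuous_on UNIV (\<lambda>x. f (T x))"
    using continuous_on_compose[OF cT continuous_on_subset[OF assms(2)]] by (simp add: o_def)
  have mT: "T \<in> measurable lborel borel"
    using borel_measurable_continuous_onI[OF cT] by simp
  have "sph r (\<lambda>x. f (T x)) = (\<lambda>x. sph r f (T x))"
    by (auto simp: sph_def np linear_cmul[OF lin])
  then have "integral\<^sup>L lborel (sph r (\<lambda>x. f (T x))) = integral\<^sup>L (distr lborel borel T) (sph r f)"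
    using integral_distr[OF mT sph_meas[OF assms(2)]] by simp
  then show ?thesis using d by (simp add: avg_eq cfT assms(2))
qed

lemma distr_lborel_eq:
  fixes T S :: "real^'n::finite \<Rightarrow> real^'n"
  assumes lT: "linear T" and lS: "linear S" and TS: "\<And>x. T (S x) = x" and ST: "\<And>x. S (T x) = x"
    and mS: "\<And>A. A \<in> lmeasurable \<Longrightarrow> S ` A \<in> lmeasurable \<and> measure lebesgue (S ` A) = measure lebesgue A"
  shows "distr lborel borel T = lborel"
proof (rule lborel_eqI[symmetric])
  show "sets (distr lborel borel T) = sets borel" by simp
  fix l u :: "real^'n"
  assume lu: "\<And>b. b \<in> Basis \<Longrightarrow> l \<bullet> b \<le> u \<bullet> b"
  have cT: "continuous_on UNIV T" using lT by (simp add: linear_continuous_on linear_linear)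
  have mT: "T \<in> measurable lborel borel"
    using borel_measurable_continuous_onI[OF cT] by simp
  have pre0: "T -` box l u = S ` box l u"
  proof
    show "T -` box l u \<subseteq> S ` box l u"
    proof
      fix x assume "x \<in> T -` box l u"
      then have "T x \<in> box l u" by simp
      then show "x \<in> S ` box l u" using ST by (intro image_eqI[of x S "T x"]) auto
    qed
    show "S ` box l u \<subseteq> T -` box l u" using TS by auto
  qed
  then have pre: "T -` box l u \<inter> space lborel = S ` box l u" by simp
  have opn: "open (T -` box l u)"
    by (rule continuous_open_vimage) (auto simp: lT linear_continuous_at linear_linear)
  have bor: "S ` box l u \<in> sets lborel" using opn pre0 by simp
  have bdd: "bounded (S ` box l u)"
    using lS bounded_box by (simp add: bounded_linear_image linear_linear)
  have "emeasure (distr lborel borel T) (box l u) = emeasure lborel (S ` box l u)"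
    by (subst emeasure_distr[OF mT]) (auto simp: pre0)
  also have "\<dots> = ennreal (measure lborel (S ` box l u))"
    using emeasure_bounded_finite[OF bdd] by (simp add: emeasure_eq_ennreal_measure)
  also have "measure lborel (S ` box l u) = measure lebesgue (S ` box l u)"
    using bor by simp
  also have "\<dots> = measure lebesgue (box l u)" using mS[of "box l u"] by simp
  also have "\<dots> = measure lborel (box l u)" by simp
  also have "ennreal (measure lborel (box l u)) = emeasure lborel (box l u)"
    using emeasure_bounded_finite[of "box l u"] by (simp add: emeasure_eq_ennreal_measure)
  also have "\<dots> = (\<Prod>b\<in>Basis. (u - l) \<bullet> b)" using lu by (simp add: emeasure_lborel_box_eq)
  finally show "emeasure (distr lborel borel T) (box l u) = (\<Prod>b\<in>Basis. (u - l) \<bullet> b)" .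
qed

definition mgood :: "(real^'n::finite \<Rightarrow> real^'n) \<Rightarrow> bool" where
  "mgood T \<longleftrightarrow> linear T \<and> (\<forall>A. A \<in> lmeasurable \<longrightarrow> T ` A \<in> lmeasurable \<and> measure lebesgue (T ` A) = measure lebesgue A)"

lemma mgood_comp: "mgood S \<Longrightarrow> mgood T \<Longrightarrow> mgood (S \<circ> T)"
proof -
  assume S: "mgood S" and T: "mgood T"
  have "(S \<circ> T) ` A = S ` (T ` A)" for A by (simp add: image_comp)
  then show ?thesis using S T unfolding mgood_def by (simp add: linear_compose)
qed

lemma shear1_mgood:
  fixes m n :: "'n::finite"
  assumes mn: "m \<noteq> n"
  shows "mgood (\<lambda>x::real^'n. \<chi> i. if i = m then x$m + x$n else x$i)"
proof -
  define f where "f = (\<lambda>x::real^'n. \<chi> i. if i = m then x$m + x$n else x$i)"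
  have lin: "linear f" unfolding f_def
    by (rule linearI) (auto simp: plus_vec_def scaleR_vec_def algebra_simps)
  have box: "measure lebesgue (f ` cbox a b) = 1 * measure lebesgue (cbox a b)" for a b :: "real^'n"
  proof (cases "cbox a b = {}")
    case True then show ?thesis by simp
  next
    case ne: False
    define c :: "real^'n" where "c = (\<chi> i. if i = n then - (a$n) else 0)"
    have add: "f (c + x) = f c + f x" for x by (simp add: linear_add[OF lin])
    have ne2: "cbox (c + a) (c + b) \<noteq> {}"
      using ne by (simp only: cbox_translation image_is_empty simp_thms)
    have an: "0 \<le> (c + a)$n" by (simp add: c_def)
    have "f ` cbox (c + a) (c + b) = (+) (f c) ` (f ` cbox a b)"
      by (simp only: cbox_translation image_image add)
    then have "measure lebesgue (f ` cbox a b) = measure lebesgue (f ` cbox (c + a) (c + b))"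
      by (simp only: measure_translation)
    also have "\<dots> = measure lebesgue (cbox (c + a) (c + b))"
      unfolding f_def by (rule measure_shear_interval[OF mn ne2 an])
    also have "\<dots> = measure lebesgue (cbox a b)"
      by (simp only: cbox_translation measure_translation)
    finally show ?thesis by simp
  qed
  have "f ` A \<in> lmeasurable \<and> measure lebesgue (f ` A) = measure lebesgue A" if "A \<in> lmeasurable" for A
    using measure_linear_sufficient[OF lin that box] by simp
  then have "mgood f" unfolding mgood_def using lin by blast
  then show ?thesis unfolding f_def .
qed

lemma stretch_img:
  fixes c :: "'n::finite \<Rightarrow> real"
  assumes "A \<in> lmeasurable"
  shows "(\<lambda>x::real^'n. \<chi> k. c k * x$k) ` A \<in> lmeasurable \<and>
         measure lebesgue ((\<lambda>x::real^'n. \<chi> k. c k * x$k) ` A) = \<bar>prod c UNIV\<bar> * measure lebesgue A"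
  using measurable_stretch[OF assms] measure_stretch[OF assms] by blast

definition shear :: "'n::finite \<Rightarrow> 'n \<Rightarrow> real \<Rightarrow> real^'n \<Rightarrow> real^'n" where
  "shear m n t x = (\<chi> i. if i = m then x$m + t * x$n else x$i)"

lemma shear_mgood:
  fixes m n :: "'n::finite"
  assumes mn: "m \<noteq> n"
  shows "mgood (shear m n t)"
proof (cases "t = 0")
  case True
  have "shear m n t = id" using True by (auto simp: shear_def fun_eq_iff vec_eq_iff)
  moreover have "mgood (id :: real^'n \<Rightarrow> real^'n)" by (simp add: mgood_def linear_id)
  ultimately show ?thesis by simp
next
  case False
  define c :: "'n \<Rightarrow> real" where "c = (\<lambda>k. if k = n then t else 1)"
  define c' :: "'n \<Rightarrow> real" where "c' = (\<lambda>k. if k = n then 1 / t else 1)"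
  define st where "st = (\<lambda>x::real^'n. \<chi> k. c k * x$k)"
  define st' where "st' = (\<lambda>x::real^'n. \<chi> k. c' k * x$k)"
  define sh where "sh = (\<lambda>x::real^'n. \<chi> i. if i = m then x$m + x$n else x$i)"
  have pc: "prod c UNIV = t" unfolding c_def by (simp add: prod.delta)
  have pc': "prod c' UNIV = 1 / t" unfolding c'_def by (simp add: prod.delta)
  have eq: "shear m n t x = st' (sh (st x))" for x
    using False mn by (auto simp: shear_def vec_eq_iff c_def c'_def st_def st'_def sh_def)
  have msh: "mgood sh" unfolding sh_def by (rule shear1_mgood[OF mn])
  have lin: "linear (shear m n t)" unfolding shear_def
    by (rule linearI) (auto simp: plus_vec_def scaleR_vec_def algebra_simps)
  have "shear m n t ` A \<in> lmeasurable \<and> measure lebesgue (shear m n t ` A) = measure lebesgue A"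
    if A: "A \<in> lmeasurable" for A
  proof -
    have im: "shear m n t ` A = st' ` (sh ` (st ` A))" by (auto simp: eq image_image)
    have 1: "st ` A \<in> lmeasurable" "measure lebesgue (st ` A) = \<bar>t\<bar> * measure lebesgue A"
      using stretch_img[OF A, of c] unfolding st_def pc by auto
    have 2: "sh ` (st ` A) \<in> lmeasurable" "measure lebesgue (sh ` (st ` A)) = \<bar>t\<bar> * measure lebesgue A"
      using msh 1 unfolding mgood_def by auto
    have 3: "st' ` (sh ` (st ` A)) \<in> lmeasurable"
         "measure lebesgue (st' ` (sh ` (st ` A))) = \<bar>1 / t\<bar> * (\<bar>t\<bar> * measure lebesgue A)"
      using stretch_img[OF 2(1), of c'] 2(2) unfolding st'_def pc' by auto
    show ?thesis using 3 False by (simp add: im abs_div)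
  qed
  then show ?thesis unfolding mgood_def using lin by blast
qed

definition rot :: "'n::finite \<Rightarrow> 'n \<Rightarrow> real \<Rightarrow> real \<Rightarrow> real^'n \<Rightarrow> real^'n" where
  "rot a b cs sn x = (\<chi> i. if i = a then cs * x$a - sn * x$b else if i = b then sn * x$a + cs * x$b else x$i)"

lemma rot_shears:
  fixes a b :: "'n::finite"
  assumes ab: "a \<noteq> b" and cs: "cs^2 + sn^2 = 1" and sn: "sn \<noteq> 0"
  shows "rot a b cs sn = shear a b ((cs - 1) / sn) \<circ> shear b a sn \<circ> shear a b ((cs - 1) / sn)"
proof -
  define p where "p = (cs - 1) / sn"
  have h1: "p * sn = cs - 1" using sn by (simp add: p_def)
  have h2: "p * (1 + cs) = - sn"
  proof -
    have "p * (1 + cs) = (cs^2 - 1) / sn" by (simp add: p_def power2_eq_square algebra_simps)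
    also have "\<dots> = - (sn^2) / sn" using cs by (smt (verit))
    also have "\<dots> = - sn" using sn by (simp add: power2_eq_square)
    finally show ?thesis .
  qed
  have "rot a b cs sn x = (shear a b p \<circ> shear b a sn \<circ> shear a b p) x" for x
  proof -
    have e1: "cs * x$a - sn * x$b = x$a + p * x$b + p * (x$b + sn * (x$a + p * x$b))"
    proof -
      have "x$a + p * x$b + p * (x$b + sn * (x$a + p * x$b)) = (1 + p * sn) * x$a + p * (2 + p * sn) * x$b"
        by (simp add: algebra_simps)
      also have "\<dots> = cs * x$a - sn * x$b"
      proof -
        have "1 + p * sn = cs" using h1 by simp
        moreover have "p * (2 + p * sn) = - sn"
        proof -
          have "p * (2 + p * sn) = p * (1 + cs)" by (simp only: h1) (simp add: algebra_simps)
          then show ?thesis using h2 by simp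
        qed
        ultimately show ?thesis by simp
      qed
      finally show ?thesis by simp
    qed
    have e2: "sn * x$a + cs * x$b = x$b + sn * (x$a + p * x$b)"
    proof -
      have "x$b + sn * (x$a + p * x$b) = sn * x$a + (1 + p * sn) * x$b" by (simp add: algebra_simps)
      then show ?thesis using h1 by simp
    qed
    show ?thesis using ab e1 e2 by (simp add: rot_def shear_def vec_eq_iff)
  qed
  then show ?thesis unfolding p_def by auto
qed

lemma rot_mgood:
  fixes a b :: "'n::finite"
  assumes ab: "a \<noteq> b" and cs: "cs^2 + sn^2 = 1" and sn: "sn \<noteq> 0"
  shows "mgood (rot a b cs sn)"
  unfolding rot_shears[OF assms] using ab by (intro mgood_comp shear_mgood) auto

lemma rot_linear: "linear (rot a b cs sn)"
  unfolding rot_def by (rule linearI) (auto simp: plus_vec_def scaleR_vec_def algebra_simps vec_eq_iff)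

lemma rot_inv:
  fixes a b :: "'n::finite"
  assumes ab: "a \<noteq> b" and cs: "cs^2 + sn^2 = 1"
  shows "rot a b cs (- sn) (rot a b cs sn x) = x"
proof -
  have 1: "cs * (cs * x$a - sn * x$b) + sn * (sn * x$a + cs * x$b) = x$a"
  proof -
    have "cs * (cs * x$a - sn * x$b) + sn * (sn * x$a + cs * x$b) = (cs^2 + sn^2) * x$a"
      by (simp add: algebra_simps power2_eq_square)
    then show ?thesis using cs by simp
  qed
  have 2: "- sn * (cs * x$a - sn * x$b) + cs * (sn * x$a + cs * x$b) = x$b"
  proof -
    have "- sn * (cs * x$a - sn * x$b) + cs * (sn * x$a + cs * x$b) = (cs^2 + sn^2) * x$b"
      by (simp add: algebra_simps power2_eq_square)
    then show ?thesis using cs by simp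
  qed
  show ?thesis using ab 1 2 by (simp add: rot_def vec_eq_iff)
qed

lemma sum_two_nonzero:
  fixes g :: "'n::finite \<Rightarrow> real"
  assumes "a \<noteq> b" "\<And>i. i \<noteq> a \<Longrightarrow> i \<noteq> b \<Longrightarrow> g i = 0"
  shows "(\<Sum>i\<in>UNIV. g i) = g a + g b"
proof -
  have "(\<Sum>i\<in>UNIV. g i) = (\<Sum>i\<in>{a,b}. g i)"
    by (rule sum.mono_neutral_right) (use assms in auto)
  then show ?thesis using assms by simp
qed

lemma rot_norm:
  fixes a b :: "'n::finite"
  assumes ab: "a \<noteq> b" and cs: "cs^2 + sn^2 = 1"
  shows "norm (rot a b cs sn x) = norm x"
proof -
  have "(\<Sum>i\<in>UNIV. (rot a b cs sn x $ i)^2 - (x$i)^2) = 0"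
  proof -
    have "(\<Sum>i\<in>UNIV. (rot a b cs sn x $ i)^2 - (x$i)^2) =
        ((cs * x$a - sn * x$b)^2 - (x$a)^2) + ((sn * x$a + cs * x$b)^2 - (x$b)^2)"
      using ab by (subst sum_two_nonzero[of a b]) (auto simp: rot_def)
    also have "\<dots> = (cs^2 + sn^2 - 1) * ((x$a)^2 + (x$b)^2)"
      by (simp add: algebra_simps power2_eq_square)
    finally show ?thesis using cs by simp
  qed
  then have "(\<Sum>i\<in>UNIV. (rot a b cs sn x $ i)^2) = (\<Sum>i\<in>UNIV. (x$i)^2)"
    by (simp add: sum_subtractf)
  then show ?thesis by (simp add: norm_vec_def L2_set_def)
qed

lemma good_of_mgood:
  fixes T S :: "real^'n::finite \<Rightarrow> real^'n"
  assumes "linear T" "\<And>x. norm (T x) = norm x" "mgood S" "\<And>x. T (S x) = x" "\<And>x. S (T x) = x"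
  shows "good T"
  using assms distr_lborel_eq[of T S] unfolding good_def mgood_def by blast

lemma rot_good:
  fixes a b :: "'n::finite"
  assumes ab: "a \<noteq> b" and cs: "cs^2 + sn^2 = 1" and sn: "sn \<noteq> 0"
  shows "good (rot a b cs sn)"
proof (rule good_of_mgood[OF rot_linear rot_norm[OF ab cs] rot_mgood[of a b cs "- sn"]])
  show "cs\<^sup>2 + (- sn)\<^sup>2 = 1" using cs by simp
  show "rot a b cs sn (rot a b cs (- sn) x) = x" for x using rot_inv[OF ab, of cs "- sn" x] cs by simp
  show "rot a b cs (- sn) (rot a b cs sn x) = x" for x using rot_inv[OF ab cs] by simp
qed (use ab sn in auto)

lemma good_comp:
  fixes S T :: "real^'n::finite \<Rightarrow> real^'n"
  assumes S: "good S" and T: "good T"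
  shows "good (S \<circ> T)"
proof -
  have lS: "linear S" and lT: "linear T" and dS: "distr lborel borel S = lborel"
    and dT: "distr lborel borel T = lborel"
    using S T unfolding good_def by auto
  have cS: "continuous_on UNIV S" using lS by (simp add: linear_continuous_on linear_linear)
  have cT: "continuous_on UNIV T" using lT by (simp add: linear_continuous_on linear_linear)
  have mS: "S \<in> measurable borel borel" using borel_measurable_continuous_onI[OF cS] .
  have mT: "T \<in> measurable lborel borel" using borel_measurable_continuous_onI[OF cT] by simp
  have "distr lborel borel (S \<circ> T) = distr (distr lborel borel T) borel S"
    by (rule distr_distr[OF mS mT, symmetric])
  also have "\<dots> = lborel" using dS dT by simp
  finally show ?thesis using S T unfolding good_def by (simp add: linear_compose)
qed

lemma good_id: "good (id :: real^'n::finite \<Rightarrow> real^'n)"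
  by (rule good_of_mgood[of id id]) (auto simp: mgood_def linear_id)

lemma refl_good: "good (coord_refl a :: real^'n::finite \<Rightarrow> real^'n)"
proof -
  define c :: "'n \<Rightarrow> real" where "c = (\<lambda>k. if k = a then -1 else 1)"
  have eq: "coord_refl a = (\<lambda>x::real^'n. \<chi> k. c k * x$k)"
    by (auto simp: coord_refl_def c_def fun_eq_iff vec_eq_iff)
  have pc: "\<bar>prod c UNIV\<bar> = 1" unfolding c_def by (simp add: prod.delta)
  have lin: "linear (coord_refl a :: real^'n \<Rightarrow> real^'n)" unfolding coord_refl_def
    by (rule linearI) (auto simp: plus_vec_def scaleR_vec_def algebra_simps vec_eq_iff)
  have "coord_refl a ` A \<in> lmeasurable \<and> measure lebesgue (coord_refl a ` A) = measure lebesgue A"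
    if "A \<in> lmeasurable" for A :: "(real^'n) set"
    using stretch_img[OF that, of c] pc unfolding eq by simp
  then have mg: "mgood (coord_refl a :: real^'n \<Rightarrow> real^'n)"
    unfolding mgood_def using lin by blast
  have inv: "coord_refl a (coord_refl a x) = x" for x :: "real^'n"
    by (simp add: coord_refl_def vec_eq_iff)
  have nrm: "norm (coord_refl a x) = norm x" for x :: "real^'n"
  proof -
    have "(\<Sum>i\<in>UNIV. (coord_refl a x $ i)^2) = (\<Sum>i\<in>UNIV. (x$i)^2)"
      by (rule sum.cong) (auto simp: coord_refl_def)
    then show ?thesis by (simp add: norm_vec_def L2_set_def)
  qed
  show ?thesis by (rule good_of_mgood[OF lin nrm mg inv inv])
qed

lemma transp_good: "good (coord_transp a b :: real^'n::finite \<Rightarrow> real^'n)"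
proof (cases "a = b")
  case True
  have "coord_transp a b = (id :: real^'n \<Rightarrow> real^'n)"
    using True by (auto simp: coord_transp_def fun_eq_iff vec_eq_iff)
  then show ?thesis using good_id by simp
next
  case False
  have "coord_transp a b = coord_refl a \<circ> (rot a b 0 1 :: real^'n \<Rightarrow> real^'n)"
    using False by (auto simp: coord_transp_def coord_refl_def rot_def fun_eq_iff vec_eq_iff)
  then show ?thesis using good_comp[OF refl_good rot_good[OF False, of 0 1]] by simp
qed

lemma hyperoct_good: "g \<in> hyperoct \<Longrightarrow> good g"
proof (induction rule: hyperoct.induct)
  case hyp_id show ?case by (rule good_id)
next
  case (hyp_transp g a b) then show ?case using good_comp[OF transp_good] by blast
next
  case (hyp_refl g a) then show ?case using good_comp[OF refl_good] by blast
qed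

definition Lst :: "'n::{finite,linorder} list" where "Lst = sorted_list_of_set UNIV"

lemma Lst_distinct: "distinct (Lst :: 'n::{finite,linorder} list)"
  by (simp add: Lst_def)
lemma Lst_set: "set (Lst :: 'n::{finite,linorder} list) = UNIV"
  by (simp add: Lst_def)
lemma Lst_length: "length (Lst :: 'n::{finite,linorder} list) = CARD('n)"
  by (simp add: Lst_def)
lemma crd_Lst: "crd k x = x $ (Lst ! k)"
  by (simp add: crd_def Lst_def)

definition pos :: "'n::{finite,linorder} \<Rightarrow> nat" where
  "pos i = (THE k. k < CARD('n) \<and> Lst ! k = i)"

lemma pos_ex1: "\<exists>!k. k < CARD('n) \<and> Lst ! k = (i::'n::{finite,linorder})"
  using distinct_Ex1[OF Lst_distinct, of i] by (simp add: Lst_set Lst_length)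

lemma pos_props: "pos i < CARD('n) \<and> Lst ! pos i = (i::'n::{finite,linorder})"
  unfolding pos_def by (rule theI'[OF pos_ex1])

lemma pos_less: "pos (i::'n::{finite,linorder}) < CARD('n)" using pos_props by blast
lemma Lst_pos: "Lst ! pos i = (i::'n::{finite,linorder})" using pos_props by blast

lemma pos_Lst: "k < CARD('n) \<Longrightarrow> pos (Lst ! k :: 'n::{finite,linorder}) = k"
  using pos_ex1[of "Lst ! k :: 'n"] pos_props[of "Lst ! k :: 'n"] by blast

lemma Lst_inj: "j < CARD('n) \<Longrightarrow> k < CARD('n) \<Longrightarrow> (Lst ! j :: 'n::{finite,linorder}) = Lst ! k \<longleftrightarrow> j = k"
  using nth_eq_iff_index_eq[OF Lst_distinct, of j k] by (simp add: Lst_length)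

definition tnth :: "nat list \<Rightarrow> nat \<Rightarrow> nat" where
  "tnth xs k = (if k < length xs then xs ! k else 0)"

definition cel :: "nat list \<Rightarrow> 'n::{finite,linorder} \<Rightarrow> nat" where
  "cel xs i = tnth xs (pos i)"

lemma cel_Lst: "k < CARD('n) \<Longrightarrow> cel xs (Lst ! k :: 'n::{finite,linorder}) = tnth xs k"
  by (simp add: cel_def pos_Lst)

definition mon :: "('n::finite \<Rightarrow> nat) \<Rightarrow> real^'n \<Rightarrow> real" where
  "mon \<alpha> x = (\<Prod>i\<in>UNIV. (x$i)^(\<alpha> i))"

fun cprod :: "nat list \<Rightarrow> nat \<Rightarrow> real^'n::{finite,linorder} \<Rightarrow> real" where
  "cprod [] k x = 1"
| "cprod (a # xs) k x = crd k x ^ a * cprod xs (k + 1) x"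

lemma mono_reindex:
  "mon \<alpha> (x :: real^'n::{finite,linorder}) = (\<Prod>k<CARD('n). crd k x ^ \<alpha> (Lst ! k))"
proof -
  have bij: "bij_betw ((!) (Lst :: 'n list)) {..<CARD('n)} UNIV"
    by (rule bij_betw_nth[OF Lst_distinct]) (simp_all add: Lst_length Lst_set)
  show ?thesis unfolding mon_def crd_Lst
    using prod.reindex_bij_betw[OF bij, of "\<lambda>i. (x$i)^(\<alpha> i)"] by simp
qed

lemma cprod_eq: "cprod xs j x = (\<Prod>k<length xs. crd (j + k) x ^ (xs ! k))"
proof (induction xs arbitrary: j)
  case Nil then show ?case by simp
next
  case (Cons a xs)
  show ?case
    by (simp add: Cons prod.lessThan_Suc_shift del: prod.lessThan_Suc)
qed

lemma mono_cel:
  assumes "length xs \<le> CARD('n)"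
  shows "mon (cel xs) (x :: real^'n::{finite,linorder}) = cprod xs 0 x"
proof -
  have "mon (cel xs) x = (\<Prod>k<CARD('n). crd k x ^ tnth xs k)"
    unfolding mono_reindex by (rule prod.cong) (auto simp: cel_Lst)
  also have "\<dots> = (\<Prod>k<length xs. crd k x ^ tnth xs k)"
    by (rule prod.mono_neutral_right) (use assms in \<open>auto simp: tnth_def\<close>)
  also have "\<dots> = cprod xs 0 x" unfolding cprod_eq by (rule prod.cong) (auto simp: tnth_def)
  finally show ?thesis .
qed

lemma mono_cont: "continuous_on UNIV (mon \<alpha> :: real^'n::finite \<Rightarrow> real)"
  unfolding mon_def by (intro continuous_intros)

definition Dl :: "(real^'n::finite) set \<Rightarrow> (real^'n \<Rightarrow> real) \<Rightarrow> nat \<Rightarrow> (real^'n \<Rightarrow> real) \<Rightarrow> real" where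
  "Dl X w s f = (\<Sum>x\<in>X. w x * norm x ^ (2 * s) * (f x - sphere_avg (norm x) f))"

lemma Dl_add:
  assumes "continuous_on UNIV f" "continuous_on UNIV g"
  shows "Dl X w s (\<lambda>x. f x + g x) = Dl X w s f + Dl X w s g"
  unfolding Dl_def avg_add[OF assms] sum.distrib[symmetric] by (rule sum.cong) (simp_all add: algebra_simps)

lemma Dl_cmult:
  assumes "continuous_on UNIV f"
  shows "Dl X w s (\<lambda>x. c * f x) = c * Dl X w s f"
  unfolding Dl_def avg_cmult[OF assms] by (simp add: algebra_simps sum_distrib_left)

lemma Dl_sum:
  fixes f :: "'a \<Rightarrow> real^'n::finite \<Rightarrow> real"
  assumes "finite I" "\<And>i. i \<in> I \<Longrightarrow> continuous_on UNIV (f i)"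
  shows "Dl X w s (\<lambda>x. \<Sum>i\<in>I. f i x) = (\<Sum>i\<in>I. Dl X w s (f i))"
proof -
  have "Dl X w s (\<lambda>x. \<Sum>i\<in>I. f i x) = (\<Sum>x\<in>X. \<Sum>i\<in>I. w x * norm x ^ (2 * s) * (f i x - sphere_avg (norm x) (f i)))"
  proof -
    have a: "sphere_avg r (\<lambda>x. \<Sum>i\<in>I. f i x) = (\<Sum>i\<in>I. sphere_avg r (f i))" for r
      using avg_sum[of I f r] assms(2) by blast
    show ?thesis unfolding Dl_def a
      by (rule sum.cong) (simp_all add: sum_distrib_left right_diff_distrib sum_subtractf)
  qed
  also have "\<dots> = (\<Sum>i\<in>I. Dl X w s (f i))" unfolding Dl_def by (rule sum.swap)
  finally show ?thesis .
qed

definition pf :: "(real \<times> ('n::finite \<Rightarrow> nat)) list \<Rightarrow> real^'n \<Rightarrow> real" where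
  "pf ps x = (\<Sum>p\<leftarrow>ps. fst p * mon (snd p) x)"

lemma pf_Nil: "pf [] = (\<lambda>x. 0)" by (simp add: pf_def fun_eq_iff)
lemma pf_Cons: "pf (p # ps) = (\<lambda>x. fst p * mon (snd p) x + pf ps x)" by (simp add: pf_def fun_eq_iff)

lemma pf_cont: "continuous_on UNIV (pf ps)"
  by (induction ps) (auto simp: pf_Nil pf_Cons intro!: continuous_intros mono_cont)

lemma Dl_zero: "Dl X w s (\<lambda>x. 0) = 0" by (simp add: Dl_def avg_const)

lemma Dl_pf: "Dl X w s (pf ps) = (\<Sum>p\<leftarrow>ps. fst p * Dl X w s (mon (snd p)))"
proof (induction ps)
  case Nil then show ?case by (simp add: pf_Nil Dl_zero)
next
  case (Cons p ps)
  have "Dl X w s (pf (p # ps)) = Dl X w s (\<lambda>x. fst p * mon (snd p) x) + Dl X w s (pf ps)"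
    unfolding pf_Cons by (rule Dl_add) (intro continuous_intros mono_cont pf_cont)+
  also have "Dl X w s (\<lambda>x. fst p * mon (snd p) x) = fst p * Dl X w s (mon (snd p))"
    by (rule Dl_cmult[OF mono_cont])
  finally show ?case using Cons by simp
qed

lemma avg_pf: "sphere_avg r (pf ps) = (\<Sum>p\<leftarrow>ps. fst p * sphere_avg r (mon (snd p)))"
proof (induction ps)
  case Nil then show ?case by (simp add: pf_Nil avg_const)
next
  case (Cons p ps)
  have "sphere_avg r (pf (p # ps)) = sphere_avg r (\<lambda>x. fst p * mon (snd p) x) + sphere_avg r (pf ps)"
    unfolding pf_Cons by (rule avg_add) (intro continuous_intros mono_cont pf_cont)+
  also have "sphere_avg r (\<lambda>x. fst p * mon (snd p) x) = fst p * sphere_avg r (mon (snd p))"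
    by (rule avg_cmult[OF mono_cont])
  finally show ?case using Cons by simp
qed

lemma good_inj: "good g \<Longrightarrow> inj g"
proof (rule injI)
  fix x y assume g: "good g" and e: "g x = g y"
  have "linear g" "\<And>z. norm (g z) = norm z" using g by (auto simp: good_def)
  then have "norm (x - y) = norm (g x - g y)" by (metis linear_diff)
  then show "x = y" using e by simp
qed

lemma Dl_inv:
  fixes f :: "real^'n::finite \<Rightarrow> real"
  assumes g: "g \<in> hyperoct" and sym: "fully_symmetric X w" and f: "continuous_on UNIV f"
  shows "Dl X w s (\<lambda>x. f (g x)) = Dl X w s f"
proof -
  have gg: "good g" using hyperoct_good[OF g] .
  have np: "\<And>x. norm (g x) = norm x" using gg by (simp add: good_def)
  have gX: "g ` X = X" and wg: "\<And>x. x \<in> X \<Longrightarrow> w (g x) = w x"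
    using sym g unfolding fully_symmetric_def by (auto, metis image_eqI)
  have inj: "inj_on g X" using good_inj[OF gg] by (simp add: inj_on_def inj_def)
  have "Dl X w s (\<lambda>x. f (g x)) = (\<Sum>x\<in>X. w (g x) * norm (g x) ^ (2 * s) * (f (g x) - sphere_avg (norm (g x)) f))"
    unfolding Dl_def avg_inv[OF gg f] np by (rule sum.cong) (auto simp: wg)
  also have "\<dots> = (\<Sum>y\<in>g ` X. w y * norm y ^ (2 * s) * (f y - sphere_avg (norm y) f))"
    by (rule sum.reindex[OF inj, symmetric, unfolded o_def])
  also have "\<dots> = Dl X w s f" unfolding gX Dl_def ..
  finally show ?thesis .
qed

lemma avg_scale:
  fixes f g :: "real^'n::finite \<Rightarrow> real"
  assumes f: "continuous_on UNIV f" and g: "continuous_on UNIV g" and r: "r > 0"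
    and fg: "\<And>y. norm y = r \<Longrightarrow> g y = c * f y"
  shows "sphere_avg r g = c * sphere_avg r f"
proof -
  have "AE x in lborel. sph r g x = c * sph r f x"
    using AE_lborel_singleton[of 0]
  proof eventually_elim
    case (elim x)
    then have "norm ((r / norm x) *\<^sub>R x) = r" using r by simp
    then show ?case by (simp add: sph_def fg)
  qed
  moreover note [measurable] = sph_meas[OF f] sph_meas[OF g]
  ultimately have "integral\<^sup>L lborel (sph r g) = integral\<^sup>L lborel (\<lambda>x. c * sph r f x)"
    by (intro integral_cong_AE) simp_all
  then show ?thesis by (simp add: avg_eq f g)
qed

lemma norm2_sum: "norm (x::real^'n::finite) ^ 2 = (\<Sum>i\<in>UNIV. (x$i)^2)"
  by (simp add: norm_vec_def L2_set_def sum_nonneg)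

lemma Dl_norm2:
  fixes f :: "real^'n::finite \<Rightarrow> real"
  assumes f: "continuous_on UNIV f" and nz: "0 \<notin> X"
  shows "Dl X w s (\<lambda>x. norm x ^ 2 * f x) = Dl X w (Suc s) f"
proof -
  have c: "continuous_on UNIV (\<lambda>x::real^'n. norm x ^ 2 * f x)" using f by (intro continuous_intros)
  have key: "sphere_avg (norm x) (\<lambda>x. norm x ^ 2 * f x) = norm x ^ 2 * sphere_avg (norm x) f" if "x \<in> X" for x
    by (rule avg_scale[OF f c]) (use nz that in auto)
  show ?thesis unfolding Dl_def
  proof (rule sum.cong)
    fix x assume x: "x \<in> X"
    have p: "norm x ^ (2 * Suc s) = norm x ^ (2 * s) * norm x ^ 2"
      by (simp add: power_add[symmetric])
    show "w x * norm x ^ (2 * s) * (norm x ^ 2 * f x - sphere_avg (norm x) (\<lambda>x. norm x ^ 2 * f x)) =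
          w x * norm x ^ (2 * Suc s) * (f x - sphere_avg (norm x) f)"
      unfolding key[OF x] p by (simp add: algebra_simps)
  qed simp
qed

lemma mono_upd2: "mon (\<alpha>(i := \<alpha> i + 2)) x = (x$i)^2 * mon \<alpha> x"
proof -
  have "mon (\<alpha>(i := \<alpha> i + 2)) x = (\<Prod>j\<in>UNIV. (x$j)^(\<alpha> j) * (if j = i then (x$j)^2 else 1))"
    unfolding mon_def
  proof (rule prod.cong)
    fix j show "(x$j)^((\<alpha>(i := \<alpha> i + 2)) j) = (x$j)^(\<alpha> j) * (if j = i then (x$j)^2 else 1)"
    proof (cases "j = i")
      case True then show ?thesis by (simp add: power_add power2_eq_square)
    next
      case False then show ?thesis by simp
    qed
  qed simp
  also have "\<dots> = mon \<alpha> x * (x$i)^2" unfolding mon_def prod.distrib by (simp add: prod.delta)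
  finally show ?thesis by simp
qed

lemma mono_upd2': "mon (\<alpha>(i := \<alpha> i + 2)) = (\<lambda>x. (x$i)^2 * mon \<alpha> x)"
  by (rule ext) (rule mono_upd2)

lemma E3_gen:
  fixes \<alpha> :: "'n::finite \<Rightarrow> nat"
  assumes nz: "0 \<notin> X"
  shows "(\<Sum>i\<in>UNIV. Dl X w s (mon (\<alpha>(i := \<alpha> i + 2)))) = Dl X w (Suc s) (mon \<alpha>)"
proof -
  have "(\<Sum>i\<in>UNIV. Dl X w s (mon (\<alpha>(i := \<alpha> i + 2)))) = (\<Sum>i\<in>UNIV. Dl X w s (\<lambda>x. (x$i)^2 * mon \<alpha> x))"
    by (simp only: mono_upd2')
  also have "\<dots> = Dl X w s (\<lambda>x. \<Sum>i\<in>UNIV. (x$i)^2 * mon \<alpha> x)"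
    by (rule Dl_sum[symmetric]) (auto intro!: continuous_intros mono_cont)
  also have "(\<lambda>x::real^'n. \<Sum>i\<in>UNIV. (x$i)^2 * mon \<alpha> x) = (\<lambda>x. norm x ^ 2 * mon \<alpha> x)"
    by (simp add: norm2_sum sum_distrib_right)
  also have "Dl X w s \<dots> = Dl X w (Suc s) (mon \<alpha>)" by (rule Dl_norm2[OF mono_cont nz])
  finally show ?thesis .
qed

lemma hyperoct_comp: "g \<in> hyperoct \<Longrightarrow> h \<in> hyperoct \<Longrightarrow> g \<circ> h \<in> hyperoct"
proof (induction rule: hyperoct.induct)
  case hyp_id then show ?case by simp
next
  case (hyp_transp g a b)
  then have "g \<circ> h \<in> hyperoct" by blast
  then show ?case using hyperoct.hyp_transp[of "g \<circ> h" a b] by (simp only: comp_assoc)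
next
  case (hyp_refl g a)
  then have "g \<circ> h \<in> hyperoct" by blast
  then show ?case using hyperoct.hyp_refl[of "g \<circ> h" a] by (simp only: comp_assoc)
qed

lemma transp_hyperoct: "coord_transp a b \<in> hyperoct"
  using hyperoct.hyp_transp[OF hyperoct.hyp_id] by simp
lemma refl_hyperoct: "coord_refl a \<in> hyperoct"
  using hyperoct.hyp_refl[OF hyperoct.hyp_id] by simp

definition Pm :: "('n::finite \<Rightarrow> 'n) \<Rightarrow> real^'n \<Rightarrow> real^'n" where
  "Pm \<sigma> x = (\<chi> j. x $ (\<sigma> j))"

lemma Pm_hyperoct:
  assumes "\<sigma> permutes (UNIV :: 'n::finite set)"
  shows "Pm \<sigma> \<in> hyperoct"
proof -
  have fin: "finite (UNIV :: 'n set)" by simp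
  show ?thesis using assms fin
proof (induction rule: permutes_induct)
  case id
  have "Pm id = (id :: real^'n \<Rightarrow> real^'n)" by (simp add: Pm_def fun_eq_iff)
  then show ?case using hyperoct.hyp_id by (simp only:)
next
  case (swap a b p)
  have "Pm (Transposition.transpose a b \<circ> p) = Pm p \<circ> coord_transp a b"
    by (simp add: Pm_def coord_transp_def fun_eq_iff Transposition.transpose_def)
  then show ?case using hyperoct_comp[OF \<open>Pm p \<in> hyperoct\<close> transp_hyperoct[of a b]] by (simp only:)
qed
qed

lemma mono_perm:
  assumes "\<sigma> permutes (UNIV :: 'n::finite set)"
  shows "mon (\<alpha> \<circ> \<sigma>) x = mon \<alpha> (Pm (inv \<sigma>) x)"
proof -
  have ip: "inv \<sigma> permutes UNIV" by (rule permutes_inv[OF assms])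
  have "mon \<alpha> (Pm (inv \<sigma>) x) = (\<Prod>j\<in>UNIV. (x $ (inv \<sigma> j))^(\<alpha> j))"
    by (simp add: mon_def Pm_def)
  also have "\<dots> = (\<Prod>j\<in>UNIV. (x $ (inv \<sigma> (\<sigma> j)))^(\<alpha> (\<sigma> j)))"
    using prod.permute[OF assms, of "\<lambda>j. (x $ (inv \<sigma> j))^(\<alpha> j)"] by (simp add: o_def)
  also have "\<dots> = mon (\<alpha> \<circ> \<sigma>) x"
    by (simp add: mon_def permutes_inverses(2)[OF assms])
  finally show ?thesis by simp
qed

definition pinv :: "(('n::finite \<Rightarrow> nat) \<Rightarrow> real) \<Rightarrow> bool" where
  "pinv \<Phi> \<longleftrightarrow> (\<forall>\<alpha> \<sigma>. \<sigma> permutes UNIV \<longrightarrow> \<Phi> (\<alpha> \<circ> \<sigma>) = \<Phi> \<alpha>)"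

lemma pinv_Dl:
  assumes "fully_symmetric X w"
  shows "pinv (\<lambda>\<alpha>. Dl X w s (mon \<alpha>))"
  unfolding pinv_def
proof (intro allI impI)
  fix \<alpha> :: "'a \<Rightarrow> nat" and \<sigma> :: "'a \<Rightarrow> 'a" assume s: "\<sigma> permutes UNIV"
  have "mon (\<alpha> \<circ> \<sigma>) = (\<lambda>x. mon \<alpha> (Pm (inv \<sigma>) x))" using mono_perm[OF s] by (simp add: fun_eq_iff)
  then show "Dl X w s (mon (\<alpha> \<circ> \<sigma>)) = Dl X w s (mon \<alpha>)"
    using Dl_inv[OF Pm_hyperoct[OF permutes_inv[OF s]] assms mono_cont] by simp
qed

lemma pinv_avg: "pinv (\<lambda>\<alpha>. sphere_avg r (mon \<alpha> :: real^'n::finite \<Rightarrow> real))"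
  unfolding pinv_def
proof (intro allI impI)
  fix \<alpha> :: "'n \<Rightarrow> nat" and \<sigma> :: "'n \<Rightarrow> 'n" assume s: "\<sigma> permutes UNIV"
  have "mon (\<alpha> \<circ> \<sigma>) = (\<lambda>x. mon \<alpha> (Pm (inv \<sigma>) x))" using mono_perm[OF s] by (simp add: fun_eq_iff)
  then show "sphere_avg r (mon (\<alpha> \<circ> \<sigma>)) = sphere_avg r (mon \<alpha>)"
    using avg_inv[OF hyperoct_good[OF Pm_hyperoct[OF permutes_inv[OF s]]] mono_cont] by simp
qed

lemma mono_refl_odd:
  assumes "odd (\<alpha> i)"
  shows "mon \<alpha> (coord_refl i x) = - mon \<alpha> x"
proof -
  have "mon \<alpha> (coord_refl i x) = (\<Prod>j\<in>UNIV. (if j = i then -1 else 1) * (x$j)^(\<alpha> j))"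
    unfolding mon_def coord_refl_def by (rule prod.cong) (auto simp: assms power_minus_odd)
  also have "\<dots> = - mon \<alpha> x" unfolding prod.distrib mon_def by (simp add: prod.delta)
  finally show ?thesis .
qed

lemma Dl_odd:
  assumes "fully_symmetric X w" "odd (\<alpha> i)"
  shows "Dl X w s (mon \<alpha>) = 0"
proof -
  have "Dl X w s (mon \<alpha>) = Dl X w s (\<lambda>x. mon \<alpha> (coord_refl i x))"
    using Dl_inv[OF refl_hyperoct[of i] assms(1) mono_cont[of \<alpha>], of s] by simp
  also have "\<dots> = Dl X w s (\<lambda>x. (-1) * mon \<alpha> x)" using mono_refl_odd[of \<alpha> i] assms(2) by simp
  also have "\<dots> = - Dl X w s (mon \<alpha>)" using Dl_cmult[OF mono_cont[of \<alpha>], of X w s "-1"] by simp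
  finally show ?thesis by simp
qed

lemma avg_odd:
  assumes "odd (\<alpha> i)"
  shows "sphere_avg r (mon \<alpha> :: real^'n::finite \<Rightarrow> real) = 0"
proof -
  have "sphere_avg r (mon \<alpha>) = sphere_avg r (\<lambda>x. mon \<alpha> (coord_refl i x))"
    using avg_inv[OF refl_good[of i] mono_cont[of \<alpha>], of r] by simp
  also have "\<dots> = sphere_avg r (\<lambda>x. (-1) * mon \<alpha> x)" using mono_refl_odd[of \<alpha> i] assms by simp
  also have "\<dots> = - sphere_avg r (mon \<alpha>)" using avg_cmult[OF mono_cont[of \<alpha>], of r "-1"] by simp
  finally show ?thesis by simp
qed

lemma pinv_mset:
  fixes \<alpha> \<beta> :: "'n::{finite,linorder} \<Rightarrow> nat"
  assumes P: "pinv \<Phi>" and m: "mset (map \<alpha> (Lst::'n list)) = mset (map \<beta> Lst)"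
  shows "\<Phi> \<alpha> = \<Phi> \<beta>"
proof -
  obtain p where p: "p permutes {..<length (map \<alpha> (Lst::'n list))}"
      "permute_list p (map \<alpha> Lst) = map \<beta> Lst"
    using mset_eq_permutation[OF m[symmetric]] by blast
  have pN: "p permutes {..<CARD('n)}" using p(1) by (simp add: Lst_length)
  have pk: "k < CARD('n) \<Longrightarrow> p k < CARD('n)" for k using permutes_in_image[OF pN] by simp
  have bk: "\<beta> (Lst ! k) = \<alpha> (Lst ! p k)" if k: "k < CARD('n)" for k
  proof -
    have "\<beta> (Lst ! k) = map \<beta> Lst ! k" using k by (simp add: Lst_length)
    also have "\<dots> = permute_list p (map \<alpha> Lst) ! k" using p(2) by simp
    also have "\<dots> = map \<alpha> Lst ! p k" using permute_list_nth[OF p(1)] k by (simp add: Lst_length)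
    also have "\<dots> = \<alpha> (Lst ! p k)" using pk[OF k] by (simp add: Lst_length)
    finally show ?thesis .
  qed
  define \<sigma> :: "'n \<Rightarrow> 'n" where "\<sigma> i = Lst ! p (pos i)" for i
  have inj: "inj \<sigma>"
  proof (rule injI)
    fix i j assume "\<sigma> i = \<sigma> j"
    then have "p (pos i) = p (pos j)" unfolding \<sigma>_def using Lst_inj pk pos_less by blast
    then have "pos i = pos j" using permutes_inj[OF pN] by (simp add: inj_def)
    then show "i = j" by (metis Lst_pos)
  qed
  have "bij \<sigma>" using inj finite_UNIV_inj_surj[of \<sigma>] by (simp add: bij_def)
  then have sp: "\<sigma> permutes UNIV" by (intro bij_imp_permutes) auto
  have "\<beta> = \<alpha> \<circ> \<sigma>"
  proof
    fix i
    have "\<beta> i = \<beta> (Lst ! pos i)" by (simp add: Lst_pos)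
    also have "\<dots> = \<alpha> (\<sigma> i)" using bk[OF pos_less] by (simp add: \<sigma>_def)
    finally show "\<beta> i = (\<alpha> \<circ> \<sigma>) i" by simp
  qed
  then show ?thesis using P sp unfolding pinv_def by simp
qed

lemma mset_split0:
  "mset zs = mset (filter (\<lambda>v. v \<noteq> 0) zs) + replicate_mset (length zs - length (filter (\<lambda>v. v \<noteq> 0) zs)) (0::nat)"
proof (induction zs)
  case Nil then show ?case by simp
next
  case (Cons a zs)
  have le: "length (filter (\<lambda>v. v \<noteq> 0) zs) \<le> length zs" by (rule length_filter_le)
  show ?case
  proof (cases "a = 0")
    case True
    then show ?thesis using Cons le by (simp add: Suc_diff_le)
  next
    case False
    then show ?thesis using Cons by simp
  qed
qed

lemma map_cel:
  assumes "length xs \<le> CARD('n::{finite,linorder})"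
  shows "map (cel xs) (Lst :: 'n list) = xs @ replicate (CARD('n) - length xs) 0"
proof (rule nth_equalityI)
  show "length (map (cel xs) (Lst :: 'n list)) = length (xs @ replicate (CARD('n) - length xs) 0)"
    using assms by (simp add: Lst_length)
  fix k assume "k < length (map (cel xs) (Lst :: 'n list))"
  then have k: "k < CARD('n)" by (simp add: Lst_length)
  show "map (cel xs) (Lst :: 'n list) ! k = (xs @ replicate (CARD('n) - length xs) 0) ! k"
    using k assms by (simp add: Lst_length cel_Lst tnth_def nth_append)
qed

lemma cel_mset:
  assumes "length xs \<le> CARD('n::{finite,linorder})"
  shows "mset (map (cel xs) (Lst :: 'n list)) =
     mset (filter (\<lambda>v. v \<noteq> 0) xs) + replicate_mset (CARD('n) - length (filter (\<lambda>v. v \<noteq> 0) xs)) 0"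
proof -
  let ?zs = "xs @ replicate (CARD('n) - length xs) (0::nat)"
  have f: "filter (\<lambda>v. v \<noteq> 0) ?zs = filter (\<lambda>v. v \<noteq> 0) xs" by simp
  have l: "length ?zs = CARD('n)" using assms by simp
  show ?thesis unfolding map_cel[OF assms] using mset_split0[of ?zs] f l by simp
qed

definition canon :: "nat list \<Rightarrow> nat list" where
  "canon xs = sort (filter (\<lambda>v. v \<noteq> 0) xs)"

lemma canon_filter: "filter (\<lambda>v. v \<noteq> 0) (canon xs) = canon xs"
  unfolding canon_def by (rule filter_True) simp

lemma canon_mset: "mset (canon xs) = mset (filter (\<lambda>v. v \<noteq> 0) xs)"
  unfolding canon_def by simp

lemma canon_length: "length (canon xs) \<le> length xs"
  unfolding canon_def by (simp add: length_filter_le)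

lemma canon_eq:
  assumes P: "pinv \<Phi>" and l: "length xs \<le> CARD('n::{finite,linorder})"
  shows "\<Phi> (cel xs :: 'n \<Rightarrow> nat) = \<Phi> (cel (canon xs))"
proof (rule pinv_mset[OF P])
  have l2: "length (canon xs) \<le> CARD('n)" using canon_length l order_trans by blast
  have len: "length (filter (\<lambda>v. v \<noteq> 0) xs) = length (canon xs)"
    using canon_mset[of xs] by (metis size_mset)
  have A: "mset (map (cel xs) (Lst::'n list)) =
     mset (filter (\<lambda>v. v \<noteq> 0) xs) + replicate_mset (CARD('n) - length (filter (\<lambda>v. v \<noteq> 0) xs)) 0"
    by (rule cel_mset[OF l])
  have B: "mset (map (cel (canon xs)) (Lst::'n list)) =
     mset (filter (\<lambda>v. v \<noteq> 0) (canon xs)) + replicate_mset (CARD('n) - length (filter (\<lambda>v. v \<noteq> 0) (canon xs))) 0"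
    by (rule cel_mset[OF l2])
  have B': "mset (map (cel (canon xs)) (Lst::'n list)) =
     mset (filter (\<lambda>v. v \<noteq> 0) xs) + replicate_mset (CARD('n) - length (canon xs)) 0"
    using B unfolding canon_filter canon_mset .
  have A': "mset (map (cel xs) (Lst::'n list)) =
     mset (filter (\<lambda>v. v \<noteq> 0) xs) + replicate_mset (CARD('n) - length (canon xs)) 0"
    using A unfolding len .
  show "mset (map (cel xs) (Lst::'n list)) = mset (map (cel (canon xs)) (Lst::'n list))"
    by (rule trans[OF A' B'[symmetric]])
qed

lemma classify:
  fixes \<alpha> :: "'n::{finite,linorder} \<Rightarrow> nat"
  assumes P: "pinv \<Phi>"
  shows "\<Phi> \<alpha> = \<Phi> (cel (canon (map \<alpha> (Lst::'n list))))"
proof (rule pinv_mset[OF P])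
  let ?zs = "map \<alpha> (Lst::'n list)"
  let ?ys = "canon ?zs"
  have l2: "length ?ys \<le> CARD('n)" using canon_length[of "map \<alpha> Lst"] by (simp add: Lst_length)
  have len: "length (filter (\<lambda>v. v \<noteq> 0) ?zs) = length ?ys"
    using canon_mset[of "map \<alpha> Lst"] by (metis size_mset)
  have lz: "length ?zs = CARD('n)" by (simp add: Lst_length)
  have B: "mset (map (cel ?ys) (Lst::'n list)) =
     mset (filter (\<lambda>v. v \<noteq> 0) ?ys) + replicate_mset (CARD('n) - length (filter (\<lambda>v. v \<noteq> 0) ?ys)) 0"
    by (rule cel_mset[OF l2])
  have C: "mset ?zs = mset (filter (\<lambda>v. v \<noteq> 0) ?zs) + replicate_mset (length ?zs - length (filter (\<lambda>v. v \<noteq> 0) ?zs)) 0"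
    by (rule mset_split0)
  have B': "mset (map (cel ?ys) (Lst::'n list)) =
     mset (filter (\<lambda>v. v \<noteq> 0) ?zs) + replicate_mset (CARD('n) - length ?ys) 0"
    using B unfolding canon_filter canon_mset .
  have C': "mset ?zs = mset (filter (\<lambda>v. v \<noteq> 0) ?zs) + replicate_mset (CARD('n) - length ?ys) 0"
    using C unfolding len lz .
  show "mset ?zs = mset (map (cel ?ys) (Lst::'n list))"
    by (rule trans[OF C' B'[symmetric]])
qed

lemma canon_sum: "sum_list (canon zs) = sum_list zs"
proof -
  have "sum_list (canon zs) = sum_list (filter (\<lambda>v. v \<noteq> 0) zs)"
    unfolding canon_def by (metis mset_sort sum_mset_sum_list)
  also have "\<dots> = sum_list zs" by (induction zs) auto
  finally show ?thesis .
qed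

lemma canon_props:
  fixes \<alpha> :: "'n::{finite,linorder} \<Rightarrow> nat"
  shows "sorted (canon (map \<alpha> (Lst::'n list)))"
    and "\<And>v. v \<in> set (canon (map \<alpha> (Lst::'n list))) \<Longrightarrow> v \<noteq> 0 \<and> (\<exists>i. v = \<alpha> i)"
    and "sum_list (canon (map \<alpha> (Lst::'n list))) = (\<Sum>i\<in>UNIV. \<alpha> i)"
    and "length (canon (map \<alpha> (Lst::'n list))) \<le> CARD('n)"
proof -
  show "sorted (canon (map \<alpha> (Lst::'n list)))" by (simp add: canon_def)
  show "\<And>v. v \<in> set (canon (map \<alpha> (Lst::'n list))) \<Longrightarrow> v \<noteq> 0 \<and> (\<exists>i. v = \<alpha> i)"
    by (auto simp: canon_def)
  have "sum_list (canon (map \<alpha> (Lst::'n list))) = sum_list (map \<alpha> (Lst::'n list))" by (rule canon_sum)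
  also have "\<dots> = (\<Sum>i\<in>UNIV. \<alpha> i)"
    by (simp add: sum_list_distinct_conv_sum_set[OF Lst_distinct] Lst_set)
  finally show "sum_list (canon (map \<alpha> (Lst::'n list))) = (\<Sum>i\<in>UNIV. \<alpha> i)" .
  show "length (canon (map \<alpha> (Lst::'n list))) \<le> CARD('n)"
    using canon_length[of "map \<alpha> Lst"] by (simp add: Lst_length)
qed

definition EC :: "(real^'n::{finite,linorder}) set \<Rightarrow> (real^'n::{finite,linorder} \<Rightarrow> real) \<Rightarrow> nat \<Rightarrow> nat list \<Rightarrow> real" where
  "EC X w s ys = Dl X w s (mon (cel ys))"

lemma EC_canon:
  assumes "fully_symmetric X w" "length xs \<le> CARD('n::{finite,linorder})"
  shows "Dl X w s (mon (cel xs :: 'n \<Rightarrow> nat)) = EC X w s (canon xs)"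
  unfolding EC_def using canon_eq[OF pinv_Dl[OF assms(1)] assms(2)] by simp

lemma cel_upd_in:
  assumes k: "k < length xs" and l: "length xs \<le> CARD('n::{finite,linorder})"
  shows "(cel xs :: 'n \<Rightarrow> nat)(Lst ! k := cel xs (Lst ! k :: 'n) + 2) = cel (xs[k := xs ! k + 2])"
proof
  fix i :: 'n
  have kN: "k < CARD('n)" using k l by simp
  show "((cel xs)(Lst ! k := cel xs (Lst ! k :: 'n) + 2)) i = cel (xs[k := xs ! k + 2]) i"
  proof (cases "i = Lst ! k")
    case True
    have c: "cel xs (Lst ! k :: 'n) = tnth xs k" by (rule cel_Lst[OF kN])
    have c2: "cel (xs[k := xs ! k + 2]) (Lst ! k :: 'n) = tnth (xs[k := xs ! k + 2]) k" by (rule cel_Lst[OF kN])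
    show ?thesis using True k kN c c2 by (simp add: tnth_def)
  next
    case False
    then have "pos i \<noteq> k" using Lst_pos by metis
    then show ?thesis using False by (simp add: cel_def tnth_def)
  qed
qed

lemma cel_upd_out:
  assumes k1: "length xs \<le> k" and k2: "k < CARD('n::{finite,linorder})"
  shows "(cel xs :: 'n \<Rightarrow> nat)(Lst ! k := cel xs (Lst ! k :: 'n) + 2) = cel (xs @ replicate (k - length xs) 0 @ [2])"
proof
  fix i :: 'n
  show "((cel xs)(Lst ! k := cel xs (Lst ! k :: 'n) + 2)) i = cel (xs @ replicate (k - length xs) 0 @ [2]) i"
  proof (cases "i = Lst ! k")
    case True
    have c: "cel xs (Lst ! k :: 'n) = tnth xs k" by (rule cel_Lst[OF k2])
    have c2: "cel (xs @ replicate (k - length xs) 0 @ [2]) (Lst ! k :: 'n) = tnth (xs @ replicate (k - length xs) 0 @ [2]) k"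
      by (rule cel_Lst[OF k2])
    show ?thesis using True k1 k2 c c2 by (simp add: tnth_def nth_append)
  next
    case False
    then have "pos i \<noteq> k" using Lst_pos by metis
    then show ?thesis using False k1 by (auto simp: cel_def tnth_def nth_append)
  qed
qed

lemma canon_pad: "canon (xs @ replicate m 0 @ [2]) = canon (xs @ [2])"
  by (simp add: canon_def)

lemma E3cel:
  assumes sym: "fully_symmetric X w" and nz: "0 \<notin> X" and l: "length xs \<le> CARD('n::{finite,linorder})"
  shows "Dl X w (Suc s) (mon (cel xs :: 'n \<Rightarrow> nat)) =
     (\<Sum>j<length xs. EC X w s (canon (xs[j := xs ! j + 2]))) + real (CARD('n) - length xs) * EC X w s (canon (xs @ [2]))"
proof -
  let ?g = "\<lambda>i::'n. Dl X w s (mon ((cel xs)(i := cel xs i + 2)))"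
  have bij: "bij_betw ((!) (Lst :: 'n list)) {..<CARD('n)} UNIV"
    by (rule bij_betw_nth[OF Lst_distinct]) (simp_all add: Lst_length Lst_set)
  have "Dl X w (Suc s) (mon (cel xs :: 'n \<Rightarrow> nat)) = (\<Sum>i\<in>UNIV. ?g i)"
    using E3_gen[OF nz, where \<alpha>="cel xs :: 'n \<Rightarrow> nat" and w=w and s=s] by simp
  also have "\<dots> = (\<Sum>k<CARD('n). ?g (Lst ! k))"
    using sum.reindex_bij_betw[OF bij, of ?g] by simp
  also have "\<dots> = (\<Sum>k\<in>{0..<length xs}. ?g (Lst ! k)) + (\<Sum>k\<in>{length xs..<CARD('n)}. ?g (Lst ! k))"
    using sum.atLeastLessThan_concat[of 0 "length xs" "CARD('n)" "\<lambda>k. ?g (Lst ! k)"] l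
    by (simp add: lessThan_atLeast0)
  also have "(\<Sum>k\<in>{0..<length xs}. ?g (Lst ! k)) = (\<Sum>j<length xs. EC X w s (canon (xs[j := xs ! j + 2])))"
  proof (rule sum.cong)
    fix k assume "k \<in> {..<length xs}"
    then have k: "k < length xs" by simp
    have l2: "length (xs[k := xs ! k + 2]) \<le> CARD('n)" using l by simp
    show "?g (Lst ! k) = EC X w s (canon (xs[k := xs ! k + 2]))"
      unfolding cel_upd_in[OF k l] by (rule EC_canon[OF sym l2])
  qed (simp add: lessThan_atLeast0)
  also have "(\<Sum>k\<in>{length xs..<CARD('n)}. ?g (Lst ! k)) = (\<Sum>k\<in>{length xs..<CARD('n)}. EC X w s (canon (xs @ [2])))"
  proof (rule sum.cong)
    fix k assume "k \<in> {length xs..<CARD('n)}"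
    then have k1: "length xs \<le> k" and k2: "k < CARD('n)" by auto
    have l2: "length (xs @ replicate (k - length xs) 0 @ [2]) \<le> CARD('n)" using k1 k2 by simp
    show "?g (Lst ! k) = EC X w s (canon (xs @ [2]))"
      unfolding cel_upd_out[OF k1 k2] EC_canon[OF sym l2] canon_pad ..
  qed simp
  also have "\<dots> = real (CARD('n) - length xs) * EC X w s (canon (xs @ [2]))" by simp
  finally show ?thesis .
qed

lemma even_small: "even (v::nat) \<Longrightarrow> v \<noteq> 0 \<Longrightarrow> v \<le> 8 \<Longrightarrow> v = 2 \<or> v = 4 \<or> v = 6 \<or> v = 8"
  by (elim evenE) presburger

lemma sum_list_ge2:
  assumes "\<forall>v\<in>set ys. even v \<and> v \<noteq> (0::nat)"
  shows "2 * length ys \<le> sum_list ys"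
  using assms
proof (induction ys)
  case Nil then show ?case by simp
next
  case (Cons a ys)
  then have "2 \<le> a" by (auto elim!: evenE)
  then show ?case using Cons by simp
qed

lemma enum8:
  assumes s: "sorted ys" and e: "\<forall>v\<in>set ys. even v \<and> v \<noteq> (0::nat)" and b: "sum_list ys \<le> 8"
  shows "ys \<in> {[], [2], [4], [2,2], [6], [2,4], [2,2,2], [8], [2,6], [4,4], [2,2,4], [2,2,2,2]}"
proof -
  have len: "length ys \<le> 4" using sum_list_ge2[OF e] b by simp
  have vals: "\<And>v. v \<in> set ys \<Longrightarrow> v = 2 \<or> v = 4 \<or> v = 6 \<or> v = 8"
  proof -
    fix v assume v: "v \<in> set ys"
    have "v \<le> sum_list ys" using v by (intro member_le_sum_list) auto
    then show "v = 2 \<or> v = 4 \<or> v = 6 \<or> v = 8" using e v b even_small by auto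
  qed
  have v2: "\<And>v. v \<in> set ys \<Longrightarrow> 2 \<le> v" using vals by fastforce
  show ?thesis
  proof (cases ys)
    case Nil then show ?thesis by simp
  next
    case (Cons a t1)
    note ys1 = Cons
    show ?thesis
    proof (cases t1)
      case Nil
      have "a = 2 \<or> a = 4 \<or> a = 6 \<or> a = 8" using vals ys1 by simp
      then show ?thesis using ys1 Nil by auto
    next
      case (Cons b' t2)
      note ys2 = Cons
      have va: "a = 2 \<or> a = 4 \<or> a = 6 \<or> a = 8" using vals ys1 by simp
      have vb: "b' = 2 \<or> b' = 4 \<or> b' = 6 \<or> b' = 8" using vals ys1 ys2 by simp
      have ab: "a \<le> b'" using s ys1 ys2 by simp
      show ?thesis
      proof (cases t2)
        case Nil
        have "a + b' \<le> 8" using b ys1 ys2 Nil by simp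
        then have "(a = 2 \<and> b' = 2) \<or> (a = 2 \<and> b' = 4) \<or> (a = 2 \<and> b' = 6) \<or> (a = 4 \<and> b' = 4)"
          using va vb ab by auto
        then show ?thesis using ys1 ys2 Nil by auto
      next
        case (Cons c t3)
        note ys3 = Cons
        have vc: "c = 2 \<or> c = 4 \<or> c = 6 \<or> c = 8" using vals ys1 ys2 ys3 by simp
        have bc: "b' \<le> c" using s ys1 ys2 ys3 by simp
        show ?thesis
        proof (cases t3)
          case Nil
          have "a + b' + c \<le> 8" using b ys1 ys2 ys3 Nil by simp
          then have "(a = 2 \<and> b' = 2 \<and> c = 2) \<or> (a = 2 \<and> b' = 2 \<and> c = 4)"
            using va vb vc ab bc by auto
          then show ?thesis using ys1 ys2 ys3 Nil by auto
        next
          case (Cons d t4)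
          note ys4 = Cons
          have t4: "t4 = []" using len ys1 ys2 ys3 ys4 by simp
          have d2: "2 \<le> d" using v2 ys1 ys2 ys3 ys4 by simp
          have "a + b' + c + d \<le> 8" using b ys1 ys2 ys3 ys4 t4 by simp
          then have "a = 2 \<and> b' = 2 \<and> c = 2 \<and> d = 2" using va vb vc d2 by auto
          then show ?thesis using ys1 ys2 ys3 ys4 t4 by simp
        qed
      qed
    qed
  qed
qed

lemma group_norm:
  fixes h :: "real^'n::finite \<Rightarrow> real"
  assumes "finite X"
  shows "(\<Sum>r\<in>norm_spectrum X. \<Sum>x\<in>layer X r. h x) = (\<Sum>x\<in>X. h x)"
  unfolding norm_spectrum_def layer_def
  by (rule sum.group) (use assms in auto)

lemma layer_sum:
  fixes f :: "real^'n::finite \<Rightarrow> real"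
  assumes "finite X"
  shows "(\<Sum>r\<in>norm_spectrum X. layer_weight X w r * sphere_avg r f) = (\<Sum>x\<in>X. w x * sphere_avg (norm x) f)"
proof -
  have "(\<Sum>r\<in>norm_spectrum X. layer_weight X w r * sphere_avg r f) =
        (\<Sum>r\<in>norm_spectrum X. \<Sum>x\<in>layer X r. w x * sphere_avg (norm x) f)"
    unfolding layer_weight_def sum_distrib_right by (rule sum.cong) (auto simp: layer_def)
  also have "\<dots> = (\<Sum>x\<in>X. w x * sphere_avg (norm x) f)" by (rule group_norm[OF assms])
  finally show ?thesis .
qed

lemma moment_sum:
  fixes f :: "real^'n::finite \<Rightarrow> real"
  assumes "finite X"
  shows "moment X w s f = (\<Sum>x\<in>X. w x * norm x ^ (2 * s) * f x)"
proof -
  have "moment X w s f = (\<Sum>r\<in>norm_spectrum X. \<Sum>x\<in>layer X r. w x * norm x ^ (2 * s) * f x)"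
    unfolding moment_def by (rule sum.cong) (auto simp: layer_def)
  also have "\<dots> = (\<Sum>x\<in>X. w x * norm x ^ (2 * s) * f x)" by (rule group_norm[OF assms])
  finally show ?thesis .
qed

lemma design_Dl:
  assumes "finite X"
  shows "euclidean_design X w t \<longleftrightarrow> (\<forall>f. poly_deg_le t f \<longrightarrow> Dl X w 0 f = 0)"
proof -
  have "Dl X w 0 f = (\<Sum>x\<in>X. w x * f x) - (\<Sum>x\<in>X. w x * sphere_avg (norm x) f)" for f :: "real^'a \<Rightarrow> real"
    unfolding Dl_def by (simp add: algebra_simps sum_subtractf)
  then show ?thesis unfolding euclidean_design_def layer_sum[OF assms] by auto
qed

lemma design_Z:
  assumes fin: "finite X"
  shows "euclidean_design X w t \<longleftrightarrow> (\<forall>\<alpha>. (\<Sum>i\<in>UNIV. \<alpha> i) \<le> t \<longrightarrow> Dl X w 0 (mon \<alpha>) = 0)"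
  unfolding design_Dl[OF fin]
proof (intro iffI allI impI)
  fix \<alpha> :: "'a \<Rightarrow> nat"
  assume H: "\<forall>f. poly_deg_le t f \<longrightarrow> Dl X w 0 f = 0" and a: "(\<Sum>i\<in>UNIV. \<alpha> i) \<le> t"
  have "poly_deg_le t (mon \<alpha>)" unfolding poly_deg_le_def
    by (intro exI[of _ "{\<alpha>}"] exI[of _ "\<lambda>_. 1"]) (use a in \<open>auto simp: mon_def fun_eq_iff\<close>)
  then show "Dl X w 0 (mon \<alpha>) = 0" using H by blast
next
  fix f :: "real^'a \<Rightarrow> real"
  assume H: "\<forall>\<alpha>. (\<Sum>i\<in>UNIV. \<alpha> i) \<le> t \<longrightarrow> Dl X w 0 (mon \<alpha>) = 0" and p: "poly_deg_le t f"
  then obtain A c where A: "finite A" "\<forall>\<alpha>\<in>A. (\<Sum>i\<in>UNIV. \<alpha> i) \<le> t"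
    and f: "f = (\<lambda>x. \<Sum>\<alpha>\<in>A. c \<alpha> * mon \<alpha> x)"
    unfolding poly_deg_le_def mon_def by blast
  have "Dl X w 0 f = (\<Sum>\<alpha>\<in>A. Dl X w 0 (\<lambda>x. c \<alpha> * mon \<alpha> x))"
    unfolding f by (rule Dl_sum[OF A(1)]) (intro continuous_intros mono_cont)
  also have "\<dots> = (\<Sum>\<alpha>\<in>A. c \<alpha> * Dl X w 0 (mon \<alpha>))" by (simp add: Dl_cmult[OF mono_cont])
  also have "\<dots> = 0" using H A(2) by simp
  finally show "Dl X w 0 f = 0" .
qed

lemma sum_upd2:
  fixes \<alpha> :: "'a::finite \<Rightarrow> nat"
  shows "(\<Sum>j\<in>UNIV. (\<alpha>(i := \<alpha> i + 2)) j) = (\<Sum>j\<in>UNIV. \<alpha> j) + (2::nat)"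
proof -
  have "(\<Sum>j\<in>UNIV. (\<alpha>(i := \<alpha> i + 2)) j) = (\<Sum>j\<in>(UNIV::'a set). \<alpha> j + (if j = i then 2 else 0))"
    by (rule sum.cong) auto
  also have "\<dots> = (\<Sum>j\<in>UNIV. \<alpha> j) + 2" by (simp add: sum.distrib)
  finally show ?thesis .
qed

lemma Z_s:
  fixes \<alpha> :: "'n::finite \<Rightarrow> nat"
  assumes nz: "0 \<notin> X" and Z: "\<forall>\<alpha>::'n \<Rightarrow> nat. (\<Sum>i\<in>UNIV. \<alpha> i) \<le> t \<longrightarrow> Dl X w 0 (mon \<alpha>) = 0"
  shows "(\<Sum>i\<in>UNIV. \<alpha> i) + 2 * s \<le> t \<Longrightarrow> Dl X w s (mon \<alpha>) = 0"
proof (induction s arbitrary: \<alpha>)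
  case 0 then show ?case using Z by simp
next
  case (Suc s)
  have "Dl X w (Suc s) (mon \<alpha>) = (\<Sum>i\<in>UNIV. Dl X w s (mon (\<alpha>(i := \<alpha> i + 2))))"
    using E3_gen[OF nz] by simp
  also have "\<dots> = 0"
  proof (rule sum.neutral, intro ballI)
    fix i
    have "(\<Sum>j\<in>UNIV. (\<alpha>(i := \<alpha> i + 2)) j) + 2 * s \<le> t" using Suc.prems sum_upd2[of \<alpha> i] by simp
    then show "Dl X w s (mon (\<alpha>(i := \<alpha> i + 2))) = 0" by (rule Suc.IH)
  qed
  finally show ?case .
qed

lemma moment_Dl:
  fixes f :: "real^'n::finite \<Rightarrow> real"
  assumes fin: "finite X" and nz: "0 \<notin> X" and a: "\<And>r. r > 0 \<Longrightarrow> sphere_avg r f = 0"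
  shows "moment X w s f = Dl X w s f"
proof -
  have "\<And>x. x \<in> X \<Longrightarrow> sphere_avg (norm x) f = 0" using a nz by (metis zero_less_norm_iff)
  then show ?thesis unfolding moment_sum[OF fin] Dl_def by (intro sum.cong) auto
qed

lemma crd_cont [continuous_intros]: "continuous_on S (\<lambda>x::real^'n::{finite,linorder}. crd k x)"
  unfolding crd_Lst by (intro continuous_intros)

lemma mon_cel2: "2 \<le> CARD('n::{finite,linorder}) \<Longrightarrow> mon (cel [a,b] :: 'n \<Rightarrow> nat) x = crd 0 x ^ a * crd 1 x ^ b"
  by (simp add: mono_cel)
lemma mon_cel3: "3 \<le> CARD('n::{finite,linorder}) \<Longrightarrow> mon (cel [a,b,c] :: 'n \<Rightarrow> nat) x = crd 0 x ^ a * crd 1 x ^ b * crd 2 x ^ c"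
  by (simp add: mono_cel numeral_2_eq_2)
lemma mon_cel4: "4 \<le> CARD('n::{finite,linorder}) \<Longrightarrow> mon (cel [a,b,c,d] :: 'n \<Rightarrow> nat) x = crd 0 x ^ a * crd 1 x ^ b * crd 2 x ^ c * crd 3 x ^ d"
  by (simp add: mono_cel numeral_2_eq_2 numeral_3_eq_3)

lemma sum4: "(\<Sum>i<(4::nat). g i) = g 0 + g 1 + g 2 + (g 3 :: real)"
  by (simp add: eval_nat_numeral)

lemma mon_cel_nil: "mon (cel [] :: 'n::{finite,linorder} \<Rightarrow> nat) = (\<lambda>x. 1)"
  by (rule ext) (simp add: mono_cel)

lemma Dl_one: "Dl X w s (\<lambda>x. 1) = 0"
  by (simp add: Dl_def avg_const)

lemma f42_pf:
  assumes "2 \<le> CARD('n::{finite,linorder})"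
  shows "(f42 :: real^'n::{finite,linorder} \<Rightarrow> real) = pf [(1, cel [4,0]), ((-6), cel [2,2]), (1, cel [0,4])]"
  apply (rule ext)
  using assms  by (simp add: pf_def mon_cel2 mon_cel3 mon_cel4 f42_def Let_def ; algebra)

lemma f63_pf:
  assumes "3 \<le> CARD('n::{finite,linorder})"
  shows "(f63 :: real^'n::{finite,linorder} \<Rightarrow> real) = pf [(2, cel [6,0,0]), ((-15), cel [4,2,0]), ((-15), cel [4,0,2]), ((-15), cel [2,4,0]), (180, cel [2,2,2]), ((-15), cel [2,0,4]), (2, cel [0,6,0]), ((-15), cel [0,4,2]), ((-15), cel [0,2,4]), (2, cel [0,0,6])]"
  apply (rule ext)
  using assms by (simp add: pf_def mon_cel2 mon_cel3 mon_cel4 f63_def Let_def ; algebra)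

lemma f82_pf:
  assumes "2 \<le> CARD('n::{finite,linorder})"
  shows "(f82 :: real^'n::{finite,linorder} \<Rightarrow> real) = pf [(1, cel [8,0]), ((-28), cel [6,2]), (70, cel [4,4]), ((-28), cel [2,6]), (1, cel [0,8])]"
  apply (rule ext)
  using assms  by (simp add: pf_def mon_cel2 mon_cel3 mon_cel4 f82_def Let_def ; algebra)

lemma f84_pf:
  assumes "4 \<le> CARD('n::{finite,linorder})"
  shows "(f84 :: real^'n::{finite,linorder} \<Rightarrow> real) = pf [(3, cel [8,0,0,0]), ((-28), cel [6,2,0,0]), ((-28), cel [6,0,2,0]), ((-28), cel [6,0,0,2]), (210, cel [4,2,2,0]), (210, cel [4,2,0,2]), (210, cel [4,0,2,2]), ((-28), cel [2,6,0,0]), (210, cel [2,4,2,0]), (210, cel [2,4,0,2]), (210, cel [2,2,4,0]), ((-3780), cel [2,2,2,2]), (210, cel [2,2,0,4]), ((-28), cel [2,0,6,0]), (210, cel [2,0,4,2]), (210, cel [2,0,2,4]), ((-28), cel [2,0,0,6]), (3, cel [0,8,0,0]), ((-28), cel [0,6,2,0]), ((-28), cel [0,6,0,2]), (210, cel [0,4,2,2]), ((-28), cel [0,2,6,0]), (210, cel [0,2,4,2]), (210, cel [0,2,2,4]), ((-28), cel [0,2,0,6]), (3, cel [0,0,8,0]), ((-28), cel [0,0,6,2]), ((-28), cel [0,0,2,6]), (3, cel [0,0,0,8])]"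
  apply (rule ext)
  using assms by (simp add: pf_def mon_cel2 mon_cel3 mon_cel4 f84_def sum4 ; algebra)

definition R0 :: "real^'n::{finite,linorder} \<Rightarrow> real^'n::{finite,linorder}" where
  "R0 = rot (Lst ! 0) (Lst ! 1) (3/5) (4/5)"

lemma Lst01: "2 \<le> CARD('n::{finite,linorder}) \<Longrightarrow> (Lst ! 0 :: 'n) \<noteq> Lst ! 1"
proof -
  assume "2 \<le> CARD('n)"
  moreover have "distinct (Lst :: 'n list)" by (rule Lst_distinct)
  ultimately show ?thesis using nth_eq_iff_index_eq[of "Lst :: 'n list" 0 1] by (simp add: Lst_length)
qed

lemma R0_good: "2 \<le> CARD('n::{finite,linorder}) \<Longrightarrow> good (R0 :: real^'n::{finite,linorder} \<Rightarrow> real^'n::{finite,linorder})"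
  unfolding R0_def by (rule rot_good[OF Lst01]) (simp_all add: power2_eq_square)

lemma crd_R0:
  assumes "2 \<le> CARD('n::{finite,linorder})" "k < CARD('n)"
  shows "crd k (R0 (x::real^'n::{finite,linorder})) = (if k = 0 then 3/5 * crd 0 x - 4/5 * crd 1 x
      else if k = 1 then 4/5 * crd 0 x + 3/5 * crd 1 x else crd k x)"
  using assms Lst_inj[of k 0] Lst_inj[of k 1] Lst_inj[of 0 1]
  by (auto simp: crd_Lst R0_def rot_def)

lemma crd_R0_0: "2 \<le> CARD('n::{finite,linorder}) \<Longrightarrow> crd 0 (R0 (x::real^'n::{finite,linorder})) = 3/5 * crd 0 x - 4/5 * crd 1 x"
  using crd_R0[of 0 x] by simp
lemma crd_R0_1: "2 \<le> CARD('n::{finite,linorder}) \<Longrightarrow> crd (Suc 0) (R0 (x::real^'n::{finite,linorder})) = 4/5 * crd 0 x + 3/5 * crd (Suc 0) x"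
  using crd_R0[of 1 x] by simp
lemma crd_R0_k: "2 \<le> CARD('n::{finite,linorder}) \<Longrightarrow> 2 \<le> k \<Longrightarrow> k < CARD('n) \<Longrightarrow> crd k (R0 (x::real^'n::{finite,linorder})) = crd k x"
  using crd_R0[of k x] by simp

lemma crd_refl0:
  assumes "k < CARD('n::{finite,linorder})"
  shows "crd k (coord_refl (Lst ! 0) (x::real^'n::{finite,linorder})) = (if k = 0 then - crd k x else crd k x)"
  using assms Lst_inj[of k 0] by (auto simp: crd_Lst coord_refl_def)

lemma crd_refl0_0: "crd 0 (coord_refl (Lst ! 0) (x::real^'n::{finite,linorder})) = - crd 0 x"
  using crd_refl0[of 0 x] by simp
lemma crd_refl0_k: "0 < k \<Longrightarrow> k < CARD('n::{finite,linorder}) \<Longrightarrow> crd k (coord_refl (Lst ! 0) (x::real^'n::{finite,linorder})) = crd k x"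
  using crd_refl0[of k x] by simp

lemma f42_cont: "continuous_on UNIV (f42 :: real^'n::{finite,linorder} \<Rightarrow> real)"
  unfolding f42_def Let_def by (intro continuous_intros)

lemma rot_odd:
  fixes h :: "real^'n::{finite,linorder} \<Rightarrow> real"
  assumes n2: "2 \<le> CARD('n)" and hc: "continuous_on UNIV h"
    and hR: "\<And>x. h (R0 x) = h x" and hr: "\<And>x. h (coord_refl (Lst ! 0) x) = h x"
  shows "sphere_avg r (\<lambda>x. f42 x * h x) = 0"
proof -
  define g42 :: "real^'n::{finite,linorder} \<Rightarrow> real" where "g42 x = 4 * crd 0 x ^ 3 * crd 1 x - 4 * crd 0 x * crd 1 x ^ 3" for x
  have gc: "continuous_on UNIV g42" unfolding g42_def by (intro continuous_intros)
  have c0: "0 < CARD('n)" "1 < CARD('n)" using n2 by auto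
  have fR: "f42 (R0 x) = (-527/625) * f42 x + (336/625) * g42 x" for x
    unfolding f42_def Let_def g42_def
    by (simp add: crd_R0_0[OF n2] crd_R0_1[OF n2] field_simps power_divide) algebra
  have gr: "g42 (coord_refl (Lst ! 0) x) = - g42 x" for x
    unfolding g42_def using c0 by (simp add: crd_refl0_0 crd_refl0_k)
  have c1: "continuous_on UNIV (\<lambda>x. f42 x * h x)" using f42_cont hc by (intro continuous_intros)
  have c2: "continuous_on UNIV (\<lambda>x. g42 x * h x)" using gc hc by (intro continuous_intros)
  let ?A = "sphere_avg r (\<lambda>x. f42 x * h x)"
  let ?B = "sphere_avg r (\<lambda>x. g42 x * h x)"
  have "?B = sphere_avg r (\<lambda>x. g42 (coord_refl (Lst ! 0) x) * h (coord_refl (Lst ! 0) x))"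
    using avg_inv[OF refl_good c2, of r] by simp
  also have "\<dots> = sphere_avg r (\<lambda>x. (-1) * (g42 x * h x))" by (simp add: gr hr)
  also have "\<dots> = - ?B" using avg_cmult[OF c2, of r "-1"] by simp
  finally have B0: "?B = 0" by simp
  have "?A = sphere_avg r (\<lambda>x. f42 (R0 x) * h (R0 x))"
    using avg_inv[OF R0_good[OF n2] c1, of r] by simp
  also have "(\<lambda>x. f42 (R0 x) * h (R0 x)) = (\<lambda>x. (-527/625) * (f42 x * h x) + (336/625) * (g42 x * h x))"
    by (rule ext) (simp add: fR hR algebra_simps)
  also have "sphere_avg r \<dots> = sphere_avg r (\<lambda>x. (-527/625) * (f42 x * h x)) + sphere_avg r (\<lambda>x. (336/625) * (g42 x * h x))"
    by (rule avg_add) (intro continuous_intros c1 c2)+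
  also have "sphere_avg r (\<lambda>x. (-527/625) * (f42 x * h x)) = (-527/625) * ?A"
    by (rule avg_cmult[OF c1])
  also have "sphere_avg r (\<lambda>x. (336/625) * (g42 x * h x)) = (336/625) * ?B"
    by (rule avg_cmult[OF c2])
  finally show ?thesis using B0 by simp
qed

definition AC :: "'n::{finite,linorder} itself \<Rightarrow> real \<Rightarrow> nat list \<Rightarrow> real" where
  "AC T r ys = sphere_avg r (mon (cel ys) :: real^'n::{finite,linorder} \<Rightarrow> real)"

lemma AC_canon:
  "length xs \<le> CARD('n::{finite,linorder}) \<Longrightarrow> sphere_avg r (mon (cel xs :: 'n \<Rightarrow> nat)) = AC TYPE('n) r (canon xs)"
  unfolding AC_def by (rule canon_eq[OF pinv_avg])

lemma P_h1:
  assumes n: "3 \<le> CARD('n::{finite,linorder})"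
  shows "sphere_avg r (pf [(1, cel [6,0]), ((-5), cel [4,2]), ((-5), cel [2,4]), (1, cel [0,6])] :: real^'n::{finite,linorder} \<Rightarrow> real) = 0"
proof -
  have n2: "2 \<le> CARD('n)" using n by simp
  have "(pf [(1, cel [6,0]), ((-5), cel [4,2]), ((-5), cel [2,4]), (1, cel [0,6])] :: real^'n::{finite,linorder} \<Rightarrow> real) = (\<lambda>x. f42 x * (crd 0 x ^ 2 + crd 1 x ^ 2))"
    apply (rule ext)
    using n by (simp add: pf_def mon_cel2 mon_cel3 mon_cel4 f42_def Let_def ; algebra)
  moreover have "sphere_avg r (\<lambda>x::real^'n::{finite,linorder}. f42 x * (crd 0 x ^ 2 + crd 1 x ^ 2)) = 0"
  proof (rule rot_odd[OF n2])
    show "continuous_on UNIV (\<lambda>x::real^'n::{finite,linorder}. crd 0 x ^ 2 + crd 1 x ^ 2)" by (intro continuous_intros)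
    show "(\<lambda>x. crd 0 x ^ 2 + crd 1 x ^ 2) (R0 x) = (\<lambda>x. crd 0 x ^ 2 + crd 1 x ^ 2) x" for x :: "real^'n::{finite,linorder}"
      using n n2 by (simp add: crd_R0_0 crd_R0_1 crd_R0_k field_simps power_divide ; algebra)
    show "(\<lambda>x. crd 0 x ^ 2 + crd 1 x ^ 2) (coord_refl (Lst ! 0) x) = (\<lambda>x. crd 0 x ^ 2 + crd 1 x ^ 2) x" for x :: "real^'n::{finite,linorder}"
      using n by (simp add: crd_refl0_0 crd_refl0_k)
  qed
  ultimately show ?thesis by simp
qed

lemma P_h1sq:
  assumes n: "3 \<le> CARD('n::{finite,linorder})"
  shows "sphere_avg r (pf [(1, cel [8,0]), ((-4), cel [6,2]), ((-10), cel [4,4]), ((-4), cel [2,6]), (1, cel [0,8])] :: real^'n::{finite,linorder} \<Rightarrow> real) = 0"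
proof -
  have n2: "2 \<le> CARD('n)" using n by simp
  have "(pf [(1, cel [8,0]), ((-4), cel [6,2]), ((-10), cel [4,4]), ((-4), cel [2,6]), (1, cel [0,8])] :: real^'n::{finite,linorder} \<Rightarrow> real) = (\<lambda>x. f42 x * ((crd 0 x ^ 2 + crd 1 x ^ 2)^2))"
    apply (rule ext)
    using n by (simp add: pf_def mon_cel2 mon_cel3 mon_cel4 f42_def Let_def ; algebra)
  moreover have "sphere_avg r (\<lambda>x::real^'n::{finite,linorder}. f42 x * ((crd 0 x ^ 2 + crd 1 x ^ 2)^2)) = 0"
  proof (rule rot_odd[OF n2])
    show "continuous_on UNIV (\<lambda>x::real^'n::{finite,linorder}. (crd 0 x ^ 2 + crd 1 x ^ 2)^2)" by (intro continuous_intros)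
    show "(\<lambda>x. (crd 0 x ^ 2 + crd 1 x ^ 2)^2) (R0 x) = (\<lambda>x. (crd 0 x ^ 2 + crd 1 x ^ 2)^2) x" for x :: "real^'n::{finite,linorder}"
      using n n2 by (simp add: crd_R0_0 crd_R0_1 crd_R0_k field_simps power_divide ; algebra)
    show "(\<lambda>x. (crd 0 x ^ 2 + crd 1 x ^ 2)^2) (coord_refl (Lst ! 0) x) = (\<lambda>x. (crd 0 x ^ 2 + crd 1 x ^ 2)^2) x" for x :: "real^'n::{finite,linorder}"
      using n by (simp add: crd_refl0_0 crd_refl0_k)
  qed
  ultimately show ?thesis by simp
qed

lemma P_x2sq:
  assumes n: "3 \<le> CARD('n::{finite,linorder})"
  shows "sphere_avg r (pf [(1, cel [4,0,2]), ((-6), cel [2,2,2]), (1, cel [0,4,2])] :: real^'n::{finite,linorder} \<Rightarrow> real) = 0"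
proof -
  have n2: "2 \<le> CARD('n)" using n by simp
  have "(pf [(1, cel [4,0,2]), ((-6), cel [2,2,2]), (1, cel [0,4,2])] :: real^'n::{finite,linorder} \<Rightarrow> real) = (\<lambda>x. f42 x * (crd 2 x ^ 2))"
    apply (rule ext)
    using n by (simp add: pf_def mon_cel2 mon_cel3 mon_cel4 f42_def Let_def ; algebra)
  moreover have "sphere_avg r (\<lambda>x::real^'n::{finite,linorder}. f42 x * (crd 2 x ^ 2)) = 0"
  proof (rule rot_odd[OF n2])
    show "continuous_on UNIV (\<lambda>x::real^'n::{finite,linorder}. crd 2 x ^ 2)" by (intro continuous_intros)
    show "(\<lambda>x. crd 2 x ^ 2) (R0 x) = (\<lambda>x. crd 2 x ^ 2) x" for x :: "real^'n::{finite,linorder}"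
      using n n2 by (simp add: crd_R0_0 crd_R0_1 crd_R0_k field_simps power_divide ; algebra)
    show "(\<lambda>x. crd 2 x ^ 2) (coord_refl (Lst ! 0) x) = (\<lambda>x. crd 2 x ^ 2) x" for x :: "real^'n::{finite,linorder}"
      using n by (simp add: crd_refl0_0 crd_refl0_k)
  qed
  ultimately show ?thesis by simp
qed

lemma P_h1x2:
  assumes n: "3 \<le> CARD('n::{finite,linorder})"
  shows "sphere_avg r (pf [(1, cel [6,0,2]), ((-5), cel [4,2,2]), ((-5), cel [2,4,2]), (1, cel [0,6,2])] :: real^'n::{finite,linorder} \<Rightarrow> real) = 0"
proof -
  have n2: "2 \<le> CARD('n)" using n by simp
  have "(pf [(1, cel [6,0,2]), ((-5), cel [4,2,2]), ((-5), cel [2,4,2]), (1, cel [0,6,2])] :: real^'n::{finite,linorder} \<Rightarrow> real) = (\<lambda>x. f42 x * ((crd 0 x ^ 2 + crd 1 x ^ 2) * crd 2 x ^ 2))"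
    apply (rule ext)
    using n by (simp add: pf_def mon_cel2 mon_cel3 mon_cel4 f42_def Let_def ; algebra)
  moreover have "sphere_avg r (\<lambda>x::real^'n::{finite,linorder}. f42 x * ((crd 0 x ^ 2 + crd 1 x ^ 2) * crd 2 x ^ 2)) = 0"
  proof (rule rot_odd[OF n2])
    show "continuous_on UNIV (\<lambda>x::real^'n::{finite,linorder}. (crd 0 x ^ 2 + crd 1 x ^ 2) * crd 2 x ^ 2)" by (intro continuous_intros)
    show "(\<lambda>x. (crd 0 x ^ 2 + crd 1 x ^ 2) * crd 2 x ^ 2) (R0 x) = (\<lambda>x. (crd 0 x ^ 2 + crd 1 x ^ 2) * crd 2 x ^ 2) x" for x :: "real^'n::{finite,linorder}"
      using n n2 by (simp add: crd_R0_0 crd_R0_1 crd_R0_k field_simps power_divide ; algebra)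
    show "(\<lambda>x. (crd 0 x ^ 2 + crd 1 x ^ 2) * crd 2 x ^ 2) (coord_refl (Lst ! 0) x) = (\<lambda>x. (crd 0 x ^ 2 + crd 1 x ^ 2) * crd 2 x ^ 2) x" for x :: "real^'n::{finite,linorder}"
      using n by (simp add: crd_refl0_0 crd_refl0_k)
  qed
  ultimately show ?thesis by simp
qed

lemma P_x2x3:
  assumes n: "4 \<le> CARD('n::{finite,linorder})"
  shows "sphere_avg r (pf [(1, cel [4,0,2,2]), ((-6), cel [2,2,2,2]), (1, cel [0,4,2,2])] :: real^'n::{finite,linorder} \<Rightarrow> real) = 0"
proof -
  have n2: "2 \<le> CARD('n)" using n by simp
  have "(pf [(1, cel [4,0,2,2]), ((-6), cel [2,2,2,2]), (1, cel [0,4,2,2])] :: real^'n::{finite,linorder} \<Rightarrow> real) = (\<lambda>x. f42 x * (crd 2 x ^ 2 * crd 3 x ^ 2))"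
    apply (rule ext)
    using n by (simp add: pf_def mon_cel2 mon_cel3 mon_cel4 f42_def Let_def ; algebra)
  moreover have "sphere_avg r (\<lambda>x::real^'n::{finite,linorder}. f42 x * (crd 2 x ^ 2 * crd 3 x ^ 2)) = 0"
  proof (rule rot_odd[OF n2])
    show "continuous_on UNIV (\<lambda>x::real^'n::{finite,linorder}. crd 2 x ^ 2 * crd 3 x ^ 2)" by (intro continuous_intros)
    show "(\<lambda>x. crd 2 x ^ 2 * crd 3 x ^ 2) (R0 x) = (\<lambda>x. crd 2 x ^ 2 * crd 3 x ^ 2) x" for x :: "real^'n::{finite,linorder}"
      using n n2 by (simp add: crd_R0_0 crd_R0_1 crd_R0_k field_simps power_divide ; algebra)
    show "(\<lambda>x. crd 2 x ^ 2 * crd 3 x ^ 2) (coord_refl (Lst ! 0) x) = (\<lambda>x. crd 2 x ^ 2 * crd 3 x ^ 2) x" for x :: "real^'n::{finite,linorder}"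
      using n by (simp add: crd_refl0_0 crd_refl0_k)
  qed
  ultimately show ?thesis by simp
qed

lemma P_x2q:
  assumes n: "3 \<le> CARD('n::{finite,linorder})"
  shows "sphere_avg r (pf [(1, cel [4,0,4]), ((-6), cel [2,2,4]), (1, cel [0,4,4])] :: real^'n::{finite,linorder} \<Rightarrow> real) = 0"
proof -
  have n2: "2 \<le> CARD('n)" using n by simp
  have "(pf [(1, cel [4,0,4]), ((-6), cel [2,2,4]), (1, cel [0,4,4])] :: real^'n::{finite,linorder} \<Rightarrow> real) = (\<lambda>x. f42 x * (crd 2 x ^ 4))"
    apply (rule ext)
    using n by (simp add: pf_def mon_cel2 mon_cel3 mon_cel4 f42_def Let_def ; algebra)
  moreover have "sphere_avg r (\<lambda>x::real^'n::{finite,linorder}. f42 x * (crd 2 x ^ 4)) = 0"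
  proof (rule rot_odd[OF n2])
    show "continuous_on UNIV (\<lambda>x::real^'n::{finite,linorder}. crd 2 x ^ 4)" by (intro continuous_intros)
    show "(\<lambda>x. crd 2 x ^ 4) (R0 x) = (\<lambda>x. crd 2 x ^ 4) x" for x :: "real^'n::{finite,linorder}"
      using n n2 by (simp add: crd_R0_0 crd_R0_1 crd_R0_k field_simps power_divide ; algebra)
    show "(\<lambda>x. crd 2 x ^ 4) (coord_refl (Lst ! 0) x) = (\<lambda>x. crd 2 x ^ 4) x" for x :: "real^'n::{finite,linorder}"
      using n by (simp add: crd_refl0_0 crd_refl0_k)
  qed
  ultimately show ?thesis by simp
qed

lemma avg_f42: "2 \<le> CARD('n::{finite,linorder}) \<Longrightarrow> sphere_avg r (f42 :: real^'n::{finite,linorder} \<Rightarrow> real) = 0"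
  using rot_odd[of "\<lambda>x. 1" r] by simp

lemma avg_f63:
  assumes n: "3 \<le> CARD('n::{finite,linorder})"
  shows "sphere_avg r (f63 :: real^'n::{finite,linorder} \<Rightarrow> real) = 0"
  using P_h1[OF n, of r] P_x2sq[OF n, of r] n
  unfolding f63_pf[OF n] avg_pf by (simp add: AC_canon canon_def)

lemma avg_f82:
  assumes n: "3 \<le> CARD('n::{finite,linorder})"
  shows "sphere_avg r (f82 :: real^'n::{finite,linorder} \<Rightarrow> real) = 0"
proof -
  have n2: "2 \<le> CARD('n)" using n by simp
  show ?thesis
  using P_h1sq[OF n, of r] P_h1x2[OF n, of r] P_x2q[OF n, of r] n
  unfolding f82_pf[OF n2] avg_pf by (simp add: AC_canon canon_def)
qed

lemma avg_f84:
  assumes n: "4 \<le> CARD('n::{finite,linorder})"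
  shows "sphere_avg r (f84 :: real^'n::{finite,linorder} \<Rightarrow> real) = 0"
proof -
  have n3: "3 \<le> CARD('n)" using n by simp
  show ?thesis
  using P_h1sq[OF n3, of r] P_h1x2[OF n3, of r] P_x2q[OF n3, of r] P_x2x3[OF n, of r] n
  unfolding f84_pf[OF n] avg_pf by (simp add: AC_canon canon_def)
qed

lemma sum_cel:
  assumes "length ys \<le> CARD('n::{finite,linorder})"
  shows "(\<Sum>i\<in>UNIV. (cel ys :: 'n \<Rightarrow> nat) i) = sum_list ys"
proof -
  have "(\<Sum>i\<in>UNIV. (cel ys :: 'n \<Rightarrow> nat) i) = sum_list (map (cel ys) (Lst :: 'n list))"
    by (simp add: sum_list_distinct_conv_sum_set[OF Lst_distinct] Lst_set)
  also have "\<dots> = sum_list ys" unfolding map_cel[OF assms] by simp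
  finally show ?thesis .
qed

lemma even_sum_list: "\<forall>v\<in>set ys. even (v::nat) \<Longrightarrow> even (sum_list ys)"
  by (induction ys) auto

definition S12 :: "nat list set" where
  "S12 = {[], [2], [4], [2,2], [6], [2,4], [2,2,2], [8], [2,6], [4,4], [2,2,4], [2,2,2,2]}"

lemma Zc:
  fixes X :: "(real^'n::{finite,linorder}) set"
  assumes sym: "fully_symmetric X w" and t: "t \<le> 9"
    and H: "\<And>ys. ys \<in> S12 \<Longrightarrow> sum_list ys \<le> t \<Longrightarrow> length ys \<le> CARD('n) \<Longrightarrow> EC X w 0 ys = 0"
  shows "\<forall>\<alpha>::'n \<Rightarrow> nat. (\<Sum>i\<in>UNIV. \<alpha> i) \<le> t \<longrightarrow> Dl X w 0 (mon \<alpha>) = 0"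
proof (intro allI impI)
  fix \<alpha> :: "'n \<Rightarrow> nat" assume a: "(\<Sum>i\<in>UNIV. \<alpha> i) \<le> t"
  show "Dl X w 0 (mon \<alpha>) = 0"
  proof (cases "\<exists>i. odd (\<alpha> i)")
    case True
    then obtain i where "odd (\<alpha> i)" by blast
    then show ?thesis by (rule Dl_odd[OF sym])
  next
    case False
    let ?ys = "canon (map \<alpha> (Lst::'n list))"
    have eq: "Dl X w 0 (mon \<alpha>) = EC X w 0 ?ys"
      unfolding EC_def using classify[OF pinv_Dl[OF sym, of 0], of \<alpha>] by simp
    have ev: "\<forall>v\<in>set ?ys. even v \<and> v \<noteq> 0" using canon_props(2)[where \<alpha>=\<alpha>] False by auto
    have sl: "sum_list ?ys \<le> t" using canon_props(3)[where \<alpha>=\<alpha>] a by simp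
    have "even (sum_list ?ys)" using even_sum_list ev by blast
    then have s8: "sum_list ?ys \<le> 8" using sl t by (auto elim!: evenE)
    have "?ys \<in> S12" unfolding S12_def by (rule enum8[OF canon_props(1) ev s8])
    then show ?thesis using H sl canon_props(4)[where \<alpha>=\<alpha>] eq by simp
  qed
qed

lemma Zs:
  fixes X :: "(real^'n::{finite,linorder}) set"
  assumes nz: "0 \<notin> X" and Z: "\<forall>\<alpha>::'n \<Rightarrow> nat. (\<Sum>i\<in>UNIV. \<alpha> i) \<le> t \<longrightarrow> Dl X w 0 (mon \<alpha>) = 0"
    and l: "length ys \<le> CARD('n)" and s: "sum_list ys + 2 * s \<le> t"
  shows "EC X w s ys = 0"
  unfolding EC_def using Z_s[OF nz Z, of "cel ys" s] sum_cel[OF l] s by simp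

lemma all_le1: "(\<forall>s\<le>(1::nat). P s) \<longleftrightarrow> P 0 \<and> P 1"
  by (auto simp: le_Suc_eq)
lemma all_le2: "(\<forall>s\<le>(2::nat). P s) \<longleftrightarrow> P 0 \<and> P 1 \<and> P 2"
  by (auto simp: le_Suc_eq numeral_2_eq_2)

theorem theorem1p6:
  fixes X :: "(real^'n::{finite,linorder}) set" and w :: "real^'n::{finite,linorder} \<Rightarrow> real"
  assumes n3: "CARD('n) \<ge> 3"
    and fin: "finite X"
    and nz: "0 \<notin> X"
    and pos: "\<forall>x\<in>X. w x > 0"
    and sym: "fully_symmetric X w"
    and layer_const: "\<forall>x\<in>X. \<forall>y\<in>X. norm x = norm y \<longrightarrow> w x = w y"
  shows "euclidean_design X w 3
    \<and> (euclidean_design X w 5 \<longleftrightarrow> moment X w 0 f42 = 0)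
    \<and> (euclidean_design X w 7 \<longleftrightarrow>
           (\<forall>s\<le>1. moment X w s f42 = 0) \<and> moment X w 0 f63 = 0)
    \<and> (euclidean_design X w 9 \<longleftrightarrow>
           (\<forall>s\<le>2. moment X w s f42 = 0) \<and> (\<forall>s\<le>1. moment X w s f63 = 0) \<and>
           moment X w 0 f82 = 0 \<and> (CARD('n) \<ge> 4 \<longrightarrow> moment X w 0 f84 = 0))"
proof -
  define N where "N = real CARD('n)"
  have N3: "3 \<le> N" using n3 unfolding N_def by simp
  have n2: "2 \<le> CARD('n)" using n3 by simp
  let ?e = "EC X w"
  let ?Z = "\<lambda>t. \<forall>\<alpha>::'n \<Rightarrow> nat. (\<Sum>i\<in>UNIV. \<alpha> i) \<le> t \<longrightarrow> Dl X w 0 (mon \<alpha>) = 0"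
  have dZ: "\<And>t. euclidean_design X w t \<longleftrightarrow> ?Z t"
    by (rule design_Z[OF fin])
  have F0: "\<And>s. ?e s [] = 0" unfolding EC_def mon_cel_nil by (rule Dl_one)
  have R: "?e (Suc s) xs = (\<Sum>j<length xs. ?e s (canon (xs[j := xs ! j + 2])))
        + real (CARD('n) - length xs) * ?e s (canon (xs @ [2]))"
    if l: "length xs \<le> CARD('n)" for s xs
    by (subst EC_def) (rule E3cel[OF sym nz l])
  have r0: "?e s [2] = 0" for s
  proof -
    have "?e (Suc s) [] = real CARD('n) * ?e s [2]" using R[of "[]" s] by (simp add: canon_def)
    then show ?thesis using F0[of "Suc s"] n3 by simp
  qed
  have r1: "?e s [4] + (N - 1) * ?e s [2,2] = 0" for s
    using R[of "[2]" s] n3 r0[of "Suc s"] by (simp add: canon_def N_def of_nat_diff algebra_simps)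
  have r2: "?e s [6] + (N - 1) * ?e s [2,4] = ?e (Suc s) [4]" for s
    using R[of "[4]" s] n3 by (simp add: canon_def N_def of_nat_diff algebra_simps)
  have r3: "2 * ?e s [2,4] + (N - 2) * ?e s [2,2,2] = ?e (Suc s) [2,2]" for s
    using R[of "[2,2]" s] n3 by (simp add: canon_def N_def of_nat_diff algebra_simps)
  have r4: "?e s [8] + (N - 1) * ?e s [2,6] = ?e (Suc s) [6]" for s
    using R[of "[6]" s] n3 by (simp add: canon_def N_def of_nat_diff algebra_simps)
  have r5: "?e s [2,6] + ?e s [4,4] + (N - 2) * ?e s [2,2,4] = ?e (Suc s) [2,4]" for s
    using R[of "[2,4]" s] n3 by (simp add: canon_def N_def of_nat_diff algebra_simps)
  have r6: "3 * ?e s [2,2,4] + (N - 3) * ?e s [2,2,2,2] = ?e (Suc s) [2,2,2]" for s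
    using R[of "[2,2,2]" s] n3 by (simp add: canon_def N_def of_nat_diff algebra_simps)
  have mDl: "moment X w s f = Dl X w s f" if "\<And>r. r > 0 \<Longrightarrow> sphere_avg r f = 0" for s f
    using moment_Dl[OF fin nz that] .
  have n3': "3 \<le> CARD('n)" using n3 by simp
  have m42: "moment X w s f42 = 2 * ?e s [4] - 6 * ?e s [2,2]" for s
  proof -
    have "moment X w s f42 = Dl X w s f42" by (rule mDl) (rule avg_f42[OF n2])
    also have "\<dots> = 2 * ?e s [4] - 6 * ?e s [2,2]"
      unfolding f42_pf[OF n2] Dl_pf using n2 by (simp add: EC_canon[OF sym] canon_def)
    finally show ?thesis .
  qed
  have m63: "moment X w s f63 = 6 * ?e s [6] - 90 * ?e s [2,4] + 180 * ?e s [2,2,2]" for s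
  proof -
    have "moment X w s f63 = Dl X w s f63" by (rule mDl) (rule avg_f63[OF n3'])
    also have "\<dots> = 6 * ?e s [6] - 90 * ?e s [2,4] + 180 * ?e s [2,2,2]"
      unfolding f63_pf[OF n3'] Dl_pf using n3' by (simp add: EC_canon[OF sym] canon_def)
    finally show ?thesis .
  qed
  have m82: "moment X w s f82 = 2 * ?e s [8] - 56 * ?e s [2,6] + 70 * ?e s [4,4]" for s
  proof -
    have "moment X w s f82 = Dl X w s f82" by (rule mDl) (rule avg_f82[OF n3'])
    also have "\<dots> = 2 * ?e s [8] - 56 * ?e s [2,6] + 70 * ?e s [4,4]"
      unfolding f82_pf[OF n2] Dl_pf using n2 by (simp add: EC_canon[OF sym] canon_def)
    finally show ?thesis .
  qed
  have m84: "moment X w s f84 = 12 * ?e s [8] - 336 * ?e s [2,6] + 2520 * ?e s [2,2,4] - 3780 * ?e s [2,2,2,2]"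
    if n4: "4 \<le> CARD('n)" for s
  proof -
    have "moment X w s f84 = Dl X w s f84" by (rule mDl) (rule avg_f84[OF n4])
    also have "\<dots> = 12 * ?e s [8] - 336 * ?e s [2,6] + 2520 * ?e s [2,2,4] - 3780 * ?e s [2,2,2,2]"
      unfolding f84_pf[OF n4] Dl_pf using n4 by (simp add: EC_canon[OF sym] canon_def)
    finally show ?thesis .
  qed
  have key42: "?e s [4] = 0 \<and> ?e s [2,2] = 0" if m: "moment X w s f42 = 0" for s
  proof -
    have A: "2 * ?e s [4] - 6 * ?e s [2,2] = 0" using m m42[of s] by simp
    have B: "?e s [4] + (N - 1) * ?e s [2,2] = 0" by (rule r1)
    have "(2 * N + 4) * ?e s [2,2] = 2 * (?e s [4] + (N - 1) * ?e s [2,2]) - (2 * ?e s [4] - 6 * ?e s [2,2])"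
      by (simp add: algebra_simps)
    then have "(2 * N + 4) * ?e s [2,2] = 0" using A B by simp
    then have z: "?e s [2,2] = 0" using N3 by simp
    then show ?thesis using B by simp
  qed
  have key63: "?e s [6] = 0 \<and> ?e s [2,4] = 0 \<and> ?e s [2,2,2] = 0"
    if h1: "?e (Suc s) [4] = 0" and h2: "?e (Suc s) [2,2] = 0" and m: "moment X w s f63 = 0" for s
  proof -
    define u where "u = ?e s [6]"
    define a where "a = ?e s [2,4]"
    define v where "v = ?e s [2,2,2]"
    have U: "u + (N - 1) * a = 0" using r2[of s] h1 unfolding u_def a_def by simp
    have V: "2 * a + (N - 2) * v = 0" using r3[of s] h2 unfolding a_def v_def by simp
    have C: "6 * u - 90 * a + 180 * v = 0" using m m63[of s] unfolding u_def a_def v_def by simp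
    define K where "K = 6 * (N - 1) * (N - 2) + 90 * (N - 2) + 360"
    have "K * a = 6 * (N - 2) * (u + (N - 1) * a) + 180 * (2 * a + (N - 2) * v) - (N - 2) * (6 * u - 90 * a + 180 * v)"
      unfolding K_def by (simp add: algebra_simps)
    then have Ka: "K * a = 0" using U V C by simp
    have "0 \<le> 6 * (N - 1) * (N - 2)" using N3 by simp
    moreover have "0 \<le> 90 * (N - 2)" using N3 by simp
    ultimately have "K > 0" unfolding K_def by linarith
    then have a0: "a = 0" using Ka by simp
    then have u0: "u = 0" using U by simp
    have "(N - 2) * v = 0" using V a0 by simp
    then have v0: "v = 0" using N3 by simp
    show ?thesis using a0 u0 v0 unfolding u_def a_def v_def by simp
  qed
  have Zs': "?e s ys = 0" if "?Z t" "length ys \<le> CARD('n)" "sum_list ys + 2 * s \<le> t" for t s ys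
    using Zs[OF nz that(1) that(2) that(3)] .
  have ZcH: "?Z t" if "t \<le> 9" "\<And>ys. ys \<in> S12 \<Longrightarrow> sum_list ys \<le> t \<Longrightarrow> length ys \<le> CARD('n) \<Longrightarrow> ?e 0 ys = 0" for t
    using Zc[OF sym that] .
  have P1: "euclidean_design X w 3"
    unfolding dZ by (rule ZcH) (auto simp: S12_def F0 r0)
  have P2: "euclidean_design X w 5 \<longleftrightarrow> moment X w 0 f42 = 0"
  proof
    assume "euclidean_design X w 5"
    then have Z: "?Z 5" using dZ by blast
    show "moment X w 0 f42 = 0" using m42[of 0] n3 by (simp add: Zs'[OF Z])
  next
    assume "moment X w 0 f42 = 0"
    then have k: "?e 0 [4] = 0" "?e 0 [2,2] = 0" using key42 by auto
    show "euclidean_design X w 5" unfolding dZ by (rule ZcH) (use k in \<open>auto simp: S12_def F0 r0\<close>)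
  qed
  have P3: "euclidean_design X w 7 \<longleftrightarrow> (\<forall>s\<le>1. moment X w s f42 = 0) \<and> moment X w 0 f63 = 0"
    unfolding all_le1
  proof
    assume "euclidean_design X w 7"
    then have Z: "?Z 7" using dZ by blast
    show "(moment X w 0 f42 = 0 \<and> moment X w 1 f42 = 0) \<and> moment X w 0 f63 = 0"
      using m42[of 0] m42[of 1] m63[of 0] n3 by (simp add: Zs'[OF Z])
  next
    assume H: "(moment X w 0 f42 = 0 \<and> moment X w 1 f42 = 0) \<and> moment X w 0 f63 = 0"
    have k0: "?e 0 [4] = 0" "?e 0 [2,2] = 0" using key42[of 0] H by auto
    have k1: "?e 1 [4] = 0" "?e 1 [2,2] = 0" using key42[of 1] H by auto
    have k6: "?e 0 [6] = 0" "?e 0 [2,4] = 0" "?e 0 [2,2,2] = 0"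
      using key63[of 0] k1 H by auto
    show "euclidean_design X w 7" unfolding dZ by (rule ZcH) (use k0 k6 in \<open>auto simp: S12_def F0 r0\<close>)
  qed
  have P4: "euclidean_design X w 9 \<longleftrightarrow>
           (\<forall>s\<le>2. moment X w s f42 = 0) \<and> (\<forall>s\<le>1. moment X w s f63 = 0) \<and>
           moment X w 0 f82 = 0 \<and> (CARD('n) \<ge> 4 \<longrightarrow> moment X w 0 f84 = 0)"
    unfolding all_le1 all_le2
  proof
    assume "euclidean_design X w 9"
    then have Z: "?Z 9" using dZ by blast
    have a: "moment X w 0 f42 = 0 \<and> moment X w 1 f42 = 0 \<and> moment X w 2 f42 = 0"
      using m42[of 0] m42[of 1] m42[of 2] n3 by (simp add: Zs'[OF Z])
    have b: "moment X w 0 f63 = 0 \<and> moment X w 1 f63 = 0"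
      using m63[of 0] m63[of 1] n3 by (simp add: Zs'[OF Z])
    have c: "moment X w 0 f82 = 0"
      using m82[of 0] n3 by (simp add: Zs'[OF Z])
    have d: "moment X w 0 f84 = 0" if n4: "4 \<le> CARD('n)"
      using m84[OF n4, of 0] n4 by (simp add: Zs'[OF Z])
    show "(moment X w 0 f42 = 0 \<and> moment X w 1 f42 = 0 \<and> moment X w 2 f42 = 0) \<and>
        (moment X w 0 f63 = 0 \<and> moment X w 1 f63 = 0) \<and>
        moment X w 0 f82 = 0 \<and> (4 \<le> CARD('n) \<longrightarrow> moment X w 0 f84 = 0)"
      using a b c d by blast
  next
    assume H: "(moment X w 0 f42 = 0 \<and> moment X w 1 f42 = 0 \<and> moment X w 2 f42 = 0) \<and>
        (moment X w 0 f63 = 0 \<and> moment X w 1 f63 = 0) \<and>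
        moment X w 0 f82 = 0 \<and> (4 \<le> CARD('n) \<longrightarrow> moment X w 0 f84 = 0)"
    have k0: "?e 0 [4] = 0" "?e 0 [2,2] = 0" using key42[of 0] H by auto
    have k1: "?e 1 [4] = 0" "?e 1 [2,2] = 0" using key42[of 1] H by auto
    have k2: "?e 2 [4] = 0" "?e 2 [2,2] = 0" using key42[of 2] H by auto
    have k61: "?e 1 [6] = 0" "?e 1 [2,4] = 0" "?e 1 [2,2,2] = 0"
      using key63[of 1] k2 H by (auto simp: numeral_2_eq_2)
    have k60: "?e 0 [6] = 0" "?e 0 [2,4] = 0" "?e 0 [2,2,2] = 0"
      using key63[of 0] k1 H by auto
    define a where "a = ?e 0 [2,6]"
    define b where "b = ?e 0 [2,2,2,2]"
    define c where "c = ?e 0 [2,2,4]"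
    define d where "d = ?e 0 [4,4]"
    define g where "g = ?e 0 [8]"
    have G0: "g + (N - 1) * a = 0" using r4[of 0] k61 unfolding g_def a_def by simp
    have D0: "a + d + (N - 2) * c = 0" using r5[of 0] k61 unfolding a_def d_def c_def by simp
    have C0: "3 * c + (N - 3) * b = 0" using r6[of 0] k61 unfolding c_def b_def by simp
    have F82: "2 * g - 56 * a + 70 * d = 0" using m82[of 0] H unfolding g_def a_def d_def by simp
    have EqA: "- (6 * N + 372) * a + 70 * (N - 2) * (N - 3) * b = 0"
    proof -
      have "- (6 * N + 372) * a + 70 * (N - 2) * (N - 3) * b =
          3 * (2 * g - 56 * a + 70 * d) - 6 * (g + (N - 1) * a) - 210 * (a + d + (N - 2) * c)
          + 70 * (N - 2) * (3 * c + (N - 3) * b)"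
        by (simp add: algebra_simps)
      then show ?thesis using G0 D0 C0 F82 by simp
    qed
    have ab: "a = 0 \<and> (4 \<le> CARD('n) \<longrightarrow> b = 0)"
    proof (cases "4 \<le> CARD('n)")
      case False
      then have "N = 3" using n3 unfolding N_def by simp
      then have "a = 0" using EqA by simp
      then show ?thesis using False by simp
    next
      case True
      then have N4: "4 \<le> N" unfolding N_def by simp
      have F84: "12 * g - 336 * a + 2520 * c - 3780 * b = 0"
        using m84[OF True, of 0] H True unfolding g_def a_def c_def b_def by simp
      have EqB: "- (36 * N + 972) * a - (2520 * N + 3780) * b = 0"
      proof -
        have "- (36 * N + 972) * a - (2520 * N + 3780) * b =
            3 * (12 * g - 336 * a + 2520 * c - 3780 * b) - 36 * (g + (N - 1) * a) - 2520 * (3 * c + (N - 3) * b)"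
          by (simp add: algebra_simps)
        then show ?thesis using G0 C0 F84 by simp
      qed
      define p where "p = 6 * N + 372"
      define q where "q = 70 * (N - 2) * (N - 3)"
      define u where "u = 36 * N + 972"
      define v where "v = 2520 * N + 3780"
      have "(u * q + p * v) * b = u * (- p * a + q * b) - p * (- u * a - v * b)"
        by (simp add: algebra_simps)
      moreover have "- p * a + q * b = 0" using EqA unfolding p_def q_def by (simp add: algebra_simps)
      moreover have "- u * a - v * b = 0" using EqB unfolding u_def v_def by (simp add: algebra_simps)
      ultimately have e: "(u * q + p * v) * b = 0" by simp
      have "0 \<le> q" unfolding q_def using N4 by simp
      moreover have "0 < u" "0 < p" "0 < v" unfolding u_def p_def v_def using N4 by simp_all
      ultimately have "0 < u * q + p * v" by (simp add: add_nonneg_pos)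
      then have b0: "b = 0" using e by simp
      then have "p * a = 0" using EqA unfolding p_def by (simp add: algebra_simps)
      then have "a = 0" using \<open>0 < p\<close> by simp
      then show ?thesis using b0 by simp
    qed
    have c0: "c = 0"
    proof (cases "4 \<le> CARD('n)")
      case True then show ?thesis using ab C0 by simp
    next
      case False
      then have "N = 3" using n3 unfolding N_def by simp
      then show ?thesis using C0 by simp
    qed
    have d0: "d = 0" using D0 ab c0 by simp
    have g0: "g = 0" using G0 ab by simp
    have k8: "?e 0 [2,6] = 0" "?e 0 [2,2,4] = 0" "?e 0 [4,4] = 0" "?e 0 [8] = 0"
      using ab c0 d0 g0 unfolding a_def c_def d_def g_def by auto
    have k4: "4 \<le> CARD('n) \<Longrightarrow> ?e 0 [2,2,2,2] = 0" using ab unfolding b_def by simp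
    show "euclidean_design X w 9" unfolding dZ
      by (rule ZcH) (use k0 k60 k8 k4 in \<open>auto simp: S12_def F0 r0\<close>)
  qed
  show ?thesis using P1 P2 P3 P4 by blast
qed

end
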